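(* Assume $m=n-1$ in the setting below, and write coordinates as $x=q^1$, $y^a=q^{1+a}$ ($a=1,\dots,n-1$), $\mathbf y=(y^1,\dots,y^{n-1})$, with $\varphi(U)=(-r,r)\times B$ for an open box $B\ni\mathbf 0$. Let $\hat P^k:=\hat{\mathbb P}^{k1}$ and $$G:=\frac{\partial\mathbb H_{11}}{\partial x}\hat P^1+\frac{\partial\mathbb H_{11}}{\partial y^a}\hat P^{1+a}+\frac{\partial(\hat P^i\hat P^j)}{\partial x}\mathbb H_{1i}\mathbb H_{1j}.$$ Then: (i) a quadratic form $\mathfrak K$ on $\hat W$, with $K:=\mathbb K_{11}$ (so $\mathfrak K(a\sigma_1)=\tfrac12Ka^2$), solves the kinetic equation $\{\mathfrak K\circ\hat{\mathfrak p},\mathfrak H\}(\sigma)=0$ for all $\sigma\in\hat W$ on $U$ if and only if $$K(x,\mathbf y)=\xi(\mathbf y)\exp\Big(-\int_0^xG(t,\mathbf y)\,\mathrm dt\Big)$$ for some smooth positive function $\xi$ on $B$; (ii) for any such $K$, with $u:=\big(\frac{\partial h}{\partial x}\hat P^1+\frac{\partial h}{\partial y^a}\hat P^{1+a}\big)K$, the function $$\hat h(x,\mathbf y)=\int_0^xu(t,\mathbf y)\,\mathrm dt+\frac{\varpi}{2}\sum_{a=1}^{n-1}(y^a)^2$$ solves the potential equation $\big(\mathrm d\hat h\circ\mathbb F\mathfrak H-\mathrm dh\circ\mathbb F(\mathfrak K\circ\hat{\mathfrak p})\big)(\sigma)=0$ for all $\sigma\in\hat W$ on $U$, for every constant $\varpi$;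 (iii) if $q_0$ is a critical point of $h$ with $\varphi(q_0)=\mathbf 0$, this $\hat h$ has $\mathbf 0$ as a critical point with positive-definite Hessian whenever $\frac{\partial u}{\partial x}(\mathbf 0)>0$ and $\varpi>\frac{\sum_{a=1}^{n-1}(\partial u/\partial y^a(\mathbf 0))^2}{\partial u/\partial x(\mathbf 0)}$; and if $\frac{\partial u}{\partial x}(\mathbf 0)\le 0$, no solution of the potential equation has a positive-definite Hessian at $\mathbf 0$.
   Context: Setting: $\mathfrak H$ is a quadratic form on $T^*Q$ ($Q$ a smooth $n$-manifold), i.e. $\mathfrak H(\alpha)=\tfrac12\langle\alpha,\rho^\sharp(\alpha)\rangle$ for a smooth positive-definite fibered inner product $\rho$ on $TQ$; $\mathbb F\mathfrak H=\rho^\sharp:T^*Q\to TQ$ is its fiber derivative ($\langle\beta,\mathbb Ff(\alpha)\rangle=\frac{d}{dt}f(\alpha+t\beta)|_{t=0}$). $h:Q\to\mathbb R$ is smooth, $W\subseteq T^*Q$ is a subbundle of rank $m$. $(U,\varphi=(q^1,\dots,q^n))$ is a chart such that $\hat W:=(\mathbb F\mathfrak H)^{-1}(\mathrm{span}\{\partial/\partial q^1,\dots,\partial/\partial q^{n-m}\})$ is a complement of $W$ on $U$ ($T^*Q=\hat W\oplus W$), with $\hat{\mathfrak p}$ the projection onto $\hat W$ along $W$. A quadratic form on $\hat W$ is $\mathfrak K(\alpha)=\tfrac12\langle\alpha,\kappa^\sharp(\alpha)\rangle$ for a positive-definite fibered inner product $\kappa$ on $\hat W^*$. $\{\cdot,\cdot\}$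 is the canonical Poisson bracket on $T^*Q$. For smooth $g$ on $Q$ and fiber-preserving $F:T^*Q\to TQ$, $\mathrm dg\circ F$ is $\alpha\mapsto\langle\mathrm dg(\pi(\alpha)),F(\alpha)\rangle$. Indices $i,j,k\in\{1,\dots,n\}$, Greek indices in $\{1,\dots,n-m\}$, summation over repeated indices. $\mathbb H_{ij}:=\langle(\mathbb F\mathfrak H)^{-1}(\partial/\partial q^i),\partial/\partial q^j\rangle$; $\sigma_\mu:=\mathbb H_{\mu k}\mathrm dq^k$ is a basis of $\hat W$; $\hat{\mathbb P}^{k\mu}$ is defined by $\hat{\mathfrak p}(\mathrm dq^k)=\hat{\mathbb P}^{k\mu}\sigma_\mu$; $\mathbb K_{\mu\nu}$ is defined by $\mathfrak K(a^\mu\sigma_\mu)=\tfrac12\mathbb K_{\mu\nu}a^\mu a^\nu$. Functions are identified with their local representatives on $\varphi(U)$. *)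

theory Defs
  imports "HOL-Analysis.Analysis"
begin

text \<open>Everything is expressed in the chart: points of phi(U) and covectors are
 vectors in real^'n (coordinates q^k, resp. components alpha_k = alpha(d/dq^k)).
 The distinguished index o plays the role of the coordinate x = q^1; the other
 indices are the coordinates y^a.\<close>

definition partial :: "(real^'n \<Rightarrow> real) \<Rightarrow> 'n \<Rightarrow> real^'n \<Rightarrow> real" where
  "partial f i q = deriv (\<lambda>t. f (q + t *\<^sub>R axis i 1)) 0"

fun pd :: "(real^'n \<Rightarrow> real) \<Rightarrow> 'n list \<Rightarrow> real^'n \<Rightarrow> real" where
  "pd f [] = f"
| "pd f (i # is) = partial (pd f is) i"

definition smooth_on :: "(real^'n) set \<Rightarrow> (real^'n \<Rightarrow> real) \<Rightarrow> bool" where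
  "smooth_on S f \<longleftrightarrow> (\<forall>is. continuous_on S (pd f is) \<and>
      (\<forall>i. \<forall>q\<in>S. (\<lambda>t. pd f is (q + t *\<^sub>R axis i 1)) field_differentiable (at 0)))"

text \<open>g q is the matrix of rho at q, g q $ i $ j = rho(d/dq^i, d/dq^j).
 rho-sharp (= FH, the fiber derivative of the Hamiltonian) is the inverse matrix.\<close>
definition FH :: "(real^'n \<Rightarrow> real^'n^'n) \<Rightarrow> real^'n \<Rightarrow> real^'n \<Rightarrow> real^'n" where
  "FH g q \<alpha> = matrix_inv (g q) *v \<alpha>"

definition hamil :: "(real^'n \<Rightarrow> real^'n^'n) \<Rightarrow> real^'n \<Rightarrow> real^'n \<Rightarrow> real" where
  "hamil g q \<alpha> = (1/2) * (\<alpha> \<bullet> FH g q \<alpha>)"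

text \<open>(FH)^(-1) = rho-flat is given by the matrix g q.  Hc = blackboard H_ij.\<close>
definition Hc :: "(real^'n \<Rightarrow> real^'n^'n) \<Rightarrow> real^'n \<Rightarrow> 'n \<Rightarrow> 'n \<Rightarrow> real" where
  "Hc g q i j = (g q *v axis i 1) $ j"

text \<open>What = (FH)^(-1)(span{d/dx}), and its basis sigma_1.\<close>
definition What :: "(real^'n \<Rightarrow> real^'n^'n) \<Rightarrow> 'n \<Rightarrow> real^'n \<Rightarrow> (real^'n) set" where
  "What g ix q = (\<lambda>v. g q *v v) ` span {axis ix 1}"

definition sigma1 :: "(real^'n \<Rightarrow> real^'n^'n) \<Rightarrow> 'n \<Rightarrow> real^'n \<Rightarrow> real^'n" where
  "sigma1 g ix q = (\<chi> k. Hc g q ix k)"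

definition phat :: "(real^'n \<Rightarrow> real^'n^'n) \<Rightarrow> 'n \<Rightarrow> (real^'n \<Rightarrow> (real^'n) set)
     \<Rightarrow> real^'n \<Rightarrow> real^'n \<Rightarrow> real^'n" where
  "phat g ix W q \<alpha> = (THE \<beta>. \<beta> \<in> What g ix q \<and> \<alpha> - \<beta> \<in> W q)"

definition Phat :: "(real^'n \<Rightarrow> real^'n^'n) \<Rightarrow> 'n \<Rightarrow> (real^'n \<Rightarrow> (real^'n) set)
     \<Rightarrow> 'n \<Rightarrow> real^'n \<Rightarrow> real" where
  "Phat g ix W k q = (THE c. phat g ix W q (axis k 1) = c *\<^sub>R sigma1 g ix q)"

definition Kform :: "(real^'n \<Rightarrow> real^'n^'n) \<Rightarrow> 'n \<Rightarrow> (real^'n \<Rightarrow> real)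
     \<Rightarrow> real^'n \<Rightarrow> real^'n \<Rightarrow> real" where
  "Kform g ix K q \<beta> = (1/2) * K q * (THE a. \<beta> = a *\<^sub>R sigma1 g ix q)^2"

definition KP :: "(real^'n \<Rightarrow> real^'n^'n) \<Rightarrow> 'n \<Rightarrow> (real^'n \<Rightarrow> (real^'n) set)
     \<Rightarrow> (real^'n \<Rightarrow> real) \<Rightarrow> real^'n \<Rightarrow> real^'n \<Rightarrow> real" where
  "KP g ix W K q \<alpha> = Kform g ix K q (phat g ix W q \<alpha>)"

text \<open>Canonical Poisson bracket of functions F q p on T*phi(U) = phi(U) x R^n.\<close>
definition poisson :: "(real^'n \<Rightarrow> real^'n \<Rightarrow> real) \<Rightarrow> (real^'n \<Rightarrow> real^'n \<Rightarrow> real)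
     \<Rightarrow> real^'n \<Rightarrow> real^'n \<Rightarrow> real" where
  "poisson F G q p = (\<Sum>i\<in>UNIV. partial (\<lambda>q'. F q' p) i q * partial (G q) i p
                                - partial (F q) i p * partial (\<lambda>q'. G q' p) i q)"

definition fib_deriv :: "(real^'n \<Rightarrow> real^'n \<Rightarrow> real) \<Rightarrow> real^'n \<Rightarrow> real^'n \<Rightarrow> real^'n" where
  "fib_deriv F q \<alpha> = (\<chi> i. partial (F q) i \<alpha>)"

text \<open>dg o F : alpha |-> <dg(pi alpha), F(alpha)>.\<close>
definition dcomp :: "(real^'n \<Rightarrow> real) \<Rightarrow> (real^'n \<Rightarrow> real^'n \<Rightarrow> real^'n)
     \<Rightarrow> real^'n \<Rightarrow> real^'n \<Rightarrow> real" where
  "dcomp f F q \<alpha> = (\<Sum>i\<in>UNIV. partial f i q * (F q \<alpha> $ i))"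

definition upd :: "'n \<Rightarrow> real^'n \<Rightarrow> real \<Rightarrow> real^'n" where
  "upd ix q t = (\<chi> k. if k = ix then t else q $ k)"

definition oint :: "real \<Rightarrow> real \<Rightarrow> (real \<Rightarrow> real) \<Rightarrow> real" where
  "oint a b f = (if a \<le> b then integral {a..b} f else - integral {b..a} f)"

definition Gfun :: "(real^'n \<Rightarrow> real^'n^'n) \<Rightarrow> 'n \<Rightarrow> (real^'n \<Rightarrow> (real^'n) set)
     \<Rightarrow> real^'n \<Rightarrow> real" where
  "Gfun g ix W q =
     partial (\<lambda>q'. Hc g q' ix ix) ix q * Phat g ix W ix q
   + (\<Sum>a\<in>UNIV - {ix}. partial (\<lambda>q'. Hc g q' ix ix) a q * Phat g ix W a q)
   + (\<Sum>i\<in>UNIV. \<Sum>j\<in>UNIV. partial (\<lambda>q'. Phat g ix W i q' * Phat g ix W j q') ix q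
                              * Hc g q ix i * Hc g q ix j)"

definition ufun :: "(real^'n \<Rightarrow> real^'n^'n) \<Rightarrow> 'n \<Rightarrow> (real^'n \<Rightarrow> (real^'n) set)
     \<Rightarrow> (real^'n \<Rightarrow> real) \<Rightarrow> (real^'n \<Rightarrow> real) \<Rightarrow> real^'n \<Rightarrow> real" where
  "ufun g ix W h K q =
     (partial h ix q * Phat g ix W ix q
      + (\<Sum>a\<in>UNIV - {ix}. partial h a q * Phat g ix W a q)) * K q"

definition hhat :: "(real^'n \<Rightarrow> real^'n^'n) \<Rightarrow> 'n \<Rightarrow> (real^'n \<Rightarrow> (real^'n) set)
     \<Rightarrow> (real^'n \<Rightarrow> real) \<Rightarrow> (real^'n \<Rightarrow> real) \<Rightarrow> real \<Rightarrow> real^'n \<Rightarrow> real" where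
  "hhat g ix W h K vpi q =
     oint 0 (q $ ix) (\<lambda>t. ufun g ix W h K (upd ix q t))
     + vpi / 2 * (\<Sum>a\<in>UNIV - {ix}. (q $ a)^2)"

definition kinetic_eq :: "(real^'n) set \<Rightarrow> (real^'n \<Rightarrow> real^'n^'n) \<Rightarrow> 'n
     \<Rightarrow> (real^'n \<Rightarrow> (real^'n) set) \<Rightarrow> (real^'n \<Rightarrow> real) \<Rightarrow> bool" where
  "kinetic_eq \<Omega> g ix W K \<longleftrightarrow>
     (\<forall>q\<in>\<Omega>. \<forall>\<sigma>\<in>What g ix q. poisson (KP g ix W K) (hamil g) q \<sigma> = 0)"

definition potential_eq :: "(real^'n) set \<Rightarrow> (real^'n \<Rightarrow> real^'n^'n) \<Rightarrow> 'n
     \<Rightarrow> (real^'n \<Rightarrow> (real^'n) set) \<Rightarrow> (real^'n \<Rightarrow> real) \<Rightarrow> (real^'n \<Rightarrow> real)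
     \<Rightarrow> (real^'n \<Rightarrow> real) \<Rightarrow> bool" where
  "potential_eq \<Omega> g ix W h K f \<longleftrightarrow>
     (\<forall>q\<in>\<Omega>. \<forall>\<sigma>\<in>What g ix q.
        dcomp f (FH g) q \<sigma> - dcomp h (fib_deriv (KP g ix W K)) q \<sigma> = 0)"

definition hessian :: "(real^'n \<Rightarrow> real) \<Rightarrow> real^'n \<Rightarrow> real^'n^'n" where
  "hessian f q = (\<chi> i j. partial (partial f j) i q)"

definition pos_def :: "real^'n^'n \<Rightarrow> bool" where
  "pos_def A \<longleftrightarrow> (\<forall>v. v \<noteq> 0 \<longrightarrow> v \<bullet> (A *v v) > 0)"

end

theory Submission
  imports Defs
begin

lemma partial_DERIV:
  assumes "((\<lambda>t. f (p + t *\<^sub>R axis i 1)) has_real_derivative D) (at 0)"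
  shows "partial f i p = D"
  using assms unfolding partial_def by (rule DERIV_imp_deriv)

lemma partial_shift:
  assumes "((\<lambda>t. f (p + t *\<^sub>R axis i 1)) has_real_derivative D) (at s)"
  shows "((\<lambda>t. f ((p + s *\<^sub>R axis i 1) + t *\<^sub>R axis i 1)) has_real_derivative D) (at 0)"
proof -
  have "((\<lambda>t. f (p + (t + s) *\<^sub>R axis i 1)) has_real_derivative D) (at 0)"
    using assms DERIV_shift[of "\<lambda>t. f (p + t *\<^sub>R axis i 1)" D 0 s] by simp
  moreover have "(\<lambda>t. f (p + (t + s) *\<^sub>R axis i 1)) = (\<lambda>t. f ((p + s *\<^sub>R axis i 1) + t *\<^sub>R axis i 1))"
    by (simp add: algebra_simps scaleR_add_left)
  ultimately show ?thesis by simp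
qed

definition c1 :: "(real^'n) set \<Rightarrow> (real^'n \<Rightarrow> real) \<Rightarrow> bool" where
  "c1 S f \<longleftrightarrow> continuous_on S f \<and> (\<forall>i. continuous_on S (partial f i) \<and>
     (\<forall>p\<in>S. ((\<lambda>t. f (p + t *\<^sub>R axis i 1)) has_real_derivative partial f i p) (at 0)))"

lemma c1_intro:
  assumes "continuous_on S f"
    and "\<And>i. \<exists>f'. continuous_on S f' \<and> (\<forall>p\<in>S. ((\<lambda>t. f (p + t *\<^sub>R axis i 1)) has_real_derivative f' p) (at 0))"
  shows "c1 S f"
  unfolding c1_def
proof (intro conjI allI assms ballI)
  fix i
  obtain f' where f': "continuous_on S f'" "\<forall>p\<in>S. ((\<lambda>t. f (p + t *\<^sub>R axis i 1)) has_real_derivative f' p) (at 0)"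
    using assms(2) by blast
  have eq: "\<forall>p\<in>S. partial f i p = f' p" using f'(2) partial_DERIV by blast
  have "continuous_on S (partial f i) = continuous_on S f'" by (rule continuous_on_cong) (auto simp: eq)
  then show "continuous_on S (partial f i)" using f'(1) by simp
  fix p assume "p \<in> S" thus "((\<lambda>t. f (p + t *\<^sub>R axis i 1)) has_real_derivative partial f i p) (at 0)"
    using f' eq by simp
qed

lemma c1_cont: "c1 S f \<Longrightarrow> continuous_on S f" by (simp add: c1_def)
lemma c1_pcont: "c1 S f \<Longrightarrow> continuous_on S (partial f i)" by (simp add: c1_def)
lemma c1_deriv: "c1 S f \<Longrightarrow> p \<in> S \<Longrightarrow> ((\<lambda>t. f (p + t *\<^sub>R axis i 1)) has_real_derivative partial f i p) (at 0)"
  by (simp add: c1_def)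

lemma c1_subset: "c1 S f \<Longrightarrow> T \<subseteq> S \<Longrightarrow> c1 T f"
  unfolding c1_def by (meson continuous_on_subset subsetD)

lemma c1_const: "c1 S (\<lambda>p. c)"
  by (rule c1_intro) (auto intro!: exI[of _ "\<lambda>p. 0"])

lemma c1_add: assumes "c1 S f" "c1 S g" shows "c1 S (\<lambda>p. f p + g p)"
proof (rule c1_intro)
  show "continuous_on S (\<lambda>p. f p + g p)" using assms by (auto intro!: continuous_intros dest: c1_cont)
  fix i show "\<exists>f'. continuous_on S f' \<and> (\<forall>p\<in>S. ((\<lambda>t. f (p + t *\<^sub>R axis i 1) + g (p + t *\<^sub>R axis i 1)) has_real_derivative f' p) (at 0))"
    using assms by (intro exI[of _ "\<lambda>p. partial f i p + partial g i p"]) (auto intro!: continuous_intros derivative_intros dest: c1_pcont c1_deriv)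
qed

lemma c1_minus: assumes "c1 S f" shows "c1 S (\<lambda>p. - f p)"
proof (rule c1_intro)
  show "continuous_on S (\<lambda>p. - f p)" using assms by (auto intro!: continuous_intros dest: c1_cont)
  fix i show "\<exists>f'. continuous_on S f' \<and> (\<forall>p\<in>S. ((\<lambda>t. - f (p + t *\<^sub>R axis i 1)) has_real_derivative f' p) (at 0))"
    using assms by (intro exI[of _ "\<lambda>p. - partial f i p"]) (auto intro!: continuous_intros derivative_intros dest: c1_pcont c1_deriv)
qed

lemma c1_mult: assumes "c1 S f" "c1 S g" shows "c1 S (\<lambda>p. f p * g p)"
proof (rule c1_intro)
  show "continuous_on S (\<lambda>p. f p * g p)" using assms by (auto intro!: continuous_intros dest: c1_cont)
  fix i show "\<exists>f'. continuous_on S f' \<and> (\<forall>p\<in>S. ((\<lambda>t. f (p + t *\<^sub>R axis i 1) * g (p + t *\<^sub>R axis i 1)) has_real_derivative f' p) (at 0))"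
  proof (intro exI[of _ "\<lambda>p. partial f i p * g p + f p * partial g i p"] conjI ballI)
    show "continuous_on S (\<lambda>p. partial f i p * g p + f p * partial g i p)"
      using assms by (auto intro!: continuous_intros dest: c1_pcont c1_cont)
    fix p assume p: "p \<in> S"
    show "((\<lambda>t. f (p + t *\<^sub>R axis i 1) * g (p + t *\<^sub>R axis i 1)) has_real_derivative partial f i p * g p + f p * partial g i p) (at 0)"
      using DERIV_mult[OF c1_deriv[OF assms(1) p, of i] c1_deriv[OF assms(2) p, of i]] by (simp add: mult.commute)
  qed
qed

lemma c1_divide: assumes "c1 S f" "c1 S g" "\<forall>p\<in>S. g p \<noteq> 0" shows "c1 S (\<lambda>p. f p / g p)"
proof (rule c1_intro)
  show "continuous_on S (\<lambda>p. f p / g p)" using assms by (auto intro!: continuous_intros dest: c1_cont)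
  fix i show "\<exists>f'. continuous_on S f' \<and> (\<forall>p\<in>S. ((\<lambda>t. f (p + t *\<^sub>R axis i 1) / g (p + t *\<^sub>R axis i 1)) has_real_derivative f' p) (at 0))"
  proof (intro exI[of _ "\<lambda>p. (partial f i p * g p - f p * partial g i p) / (g p * g p)"] conjI ballI)
    show "continuous_on S (\<lambda>p. (partial f i p * g p - f p * partial g i p) / (g p * g p))"
      using assms by (auto intro!: continuous_intros dest: c1_pcont c1_cont)
    fix p assume p: "p \<in> S"
    show "((\<lambda>t. f (p + t *\<^sub>R axis i 1) / g (p + t *\<^sub>R axis i 1)) has_real_derivative (partial f i p * g p - f p * partial g i p) / (g p * g p)) (at 0)"
      using DERIV_divide[OF c1_deriv[OF assms(1) p, of i] c1_deriv[OF assms(2) p, of i]] assms(3) p by simp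
  qed
qed

lemma c1_sum: assumes "finite A" "\<And>x. x \<in> A \<Longrightarrow> c1 S (f x)" shows "c1 S (\<lambda>p. \<Sum>x\<in>A. f x p)"
  using assms by (induction A rule: finite_induct) (auto intro: c1_const c1_add)

lemma c1_prod: assumes "finite A" "\<And>x. x \<in> A \<Longrightarrow> c1 S (f x)" shows "c1 S (\<lambda>p. \<Prod>x\<in>A. f x p)"
  using assms by (induction A rule: finite_induct) (auto intro: c1_const c1_mult)

lemma c1_if: "c1 S f \<Longrightarrow> c1 S g \<Longrightarrow> c1 S (\<lambda>p. if b then f p else g p)"
  by (cases b) auto

lemma c1_det:
  fixes M :: "real^'n \<Rightarrow> real^'m::finite^'m"
  assumes "\<And>i j. c1 S (\<lambda>p. M p $ i $ j)"
  shows "c1 S (\<lambda>p. det (M p))"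
  unfolding det_def
  by (intro c1_sum c1_mult c1_const c1_prod assms) auto

lemma smooth_c1: assumes "smooth_on S f" shows "c1 S f"
  unfolding c1_def
proof (intro conjI allI ballI)
  show "continuous_on S f" using assms unfolding smooth_on_def by (metis pd.simps(1))
  fix i show "continuous_on S (partial f i)" using assms unfolding smooth_on_def by (metis pd.simps)
  fix p assume "p \<in> S"
  then have "(\<lambda>t. f (p + t *\<^sub>R axis i 1)) field_differentiable (at 0)"
    using assms unfolding smooth_on_def by (metis pd.simps(1))
  thus "((\<lambda>t. f (p + t *\<^sub>R axis i 1)) has_real_derivative partial f i p) (at 0)"
    unfolding partial_def using DERIV_deriv_iff_field_differentiable by blast
qed

lemma smooth_c1_partial: assumes "smooth_on S f" shows "c1 S (partial f j)"
  unfolding c1_def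
proof (intro conjI allI ballI)
  show "continuous_on S (partial f j)" using assms unfolding smooth_on_def by (metis pd.simps)
  fix i show "continuous_on S (partial (partial f j) i)" using assms unfolding smooth_on_def
    by (metis pd.simps)
  fix p assume "p \<in> S"
  then have "(\<lambda>t. partial f j (p + t *\<^sub>R axis i 1)) field_differentiable (at 0)"
    using assms unfolding smooth_on_def by (metis pd.simps)
  thus "((\<lambda>t. partial f j (p + t *\<^sub>R axis i 1)) has_real_derivative partial (partial f j) i p) (at 0)"
    unfolding partial_def using DERIV_deriv_iff_field_differentiable by blast
qed

lemma ev_line:
  assumes "open U" "x \<in> U"
  shows "eventually (\<lambda>t. x + t *\<^sub>R (v::real^'n) \<in> U) (nhds (0::real))"
proof -
  have "open ((\<lambda>t::real. x + t *\<^sub>R v) -` U)"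
    using assms(1) by (intro open_vimage continuous_intros)
  then have "open {t::real. x + t *\<^sub>R v \<in> U}" by (simp add: vimage_def)
  moreover have "(0::real) \<in> {t. x + t *\<^sub>R v \<in> U}" using assms(2) by simp
  ultimately show ?thesis using eventually_nhds_in_open by fastforce
qed

lemma partial_cong_open:
  assumes "open U" "x \<in> U" "\<And>y. y \<in> U \<Longrightarrow> f y = f0 y"
  shows "partial f i x = partial f0 i x"
  unfolding partial_def
  by (rule deriv_cong_ev[OF eventually_mono[OF ev_line[OF assms(1,2), of "axis i 1"]]]) (auto simp: assms(3))

lemma DERIV_line_cong_open:
  fixes x :: "real^'n"
  assumes "open U" "x \<in> U" "\<And>y. y \<in> U \<Longrightarrow> f y = f0 y"
   and "((\<lambda>t. f0 (x + t *\<^sub>R v)) has_real_derivative D) (at 0)"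
  shows "((\<lambda>t. f (x + t *\<^sub>R v)) has_real_derivative D) (at 0)"
  using assms(4)
  by (subst DERIV_cong_ev[OF refl eventually_mono[OF ev_line[OF assms(1,2), of v]] refl]) (auto simp: assms(3))

lemma c1_local:
  assumes S: "open S"
    and loc: "\<And>p. p \<in> S \<Longrightarrow> \<exists>V f0. open V \<and> p \<in> V \<and> c1 (V \<inter> S) f0 \<and> (\<forall>x\<in>V\<inter>S. f x = f0 x)"
  shows "c1 S f"
  unfolding c1_def
proof (intro conjI allI ballI)
  show "continuous_on S f" unfolding continuous_on_eq_continuous_at[OF S]
  proof
    fix p assume p: "p \<in> S"
    obtain V f0 where V: "open V" "p \<in> V" "c1 (V \<inter> S) f0" "\<forall>x\<in>V\<inter>S. f x = f0 x" using loc[OF p] by blast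
    have o: "open (V \<inter> S)" using V(1) S by blast
    have pV: "p \<in> V \<inter> S" using V(2) p by blast
    have "isCont f0 p" using c1_cont[OF V(3)] o pV continuous_on_eq_continuous_at by blast
    moreover have ev: "eventually (\<lambda>x. x \<in> V \<inter> S) (nhds p)" by (rule eventually_nhds_in_open[OF o pV])
    have "eventually (\<lambda>x. f x = f0 x) (nhds p)"
      by (rule eventually_mono[OF ev]) (use V(4) in blast)
    ultimately show "isCont f p" using isCont_cong by blast
  qed
  fix i
  show "continuous_on S (partial f i)" unfolding continuous_on_eq_continuous_at[OF S]
  proof
    fix p assume p: "p \<in> S"
    obtain V f0 where V: "open V" "p \<in> V" "c1 (V \<inter> S) f0" "\<forall>x\<in>V\<inter>S. f x = f0 x" using loc[OF p] by blast
    have o: "open (V \<inter> S)" using V(1) S by blast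
    have pV: "p \<in> V \<inter> S" using V(2) p by blast
    have "isCont (partial f0 i) p" using c1_pcont[OF V(3)] o pV continuous_on_eq_continuous_at by blast
    moreover have ev: "eventually (\<lambda>x. x \<in> V \<inter> S) (nhds p)" by (rule eventually_nhds_in_open[OF o pV])
    have "eventually (\<lambda>x. partial f i x = partial f0 i x) (nhds p)"
    proof (rule eventually_mono[OF ev])
      fix x assume "x \<in> V \<inter> S"
      then show "partial f i x = partial f0 i x"
        by (rule partial_cong_open[OF o]) (use V(4) in blast)
    qed
    ultimately show "isCont (partial f i) p" using isCont_cong by blast
  qed
  fix p assume p: "p \<in> S"
  obtain V f0 where V: "open V" "p \<in> V" "c1 (V \<inter> S) f0" "\<forall>x\<in>V\<inter>S. f x = f0 x" using loc[OF p] by blast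
  have o: "open (V \<inter> S)" using V(1) S by blast
  have pV: "p \<in> V \<inter> S" using V(2) p by blast
  have eq: "partial f i p = partial f0 i p"
    by (rule partial_cong_open[OF o pV]) (use V(4) in blast)
  have "((\<lambda>t. f (p + t *\<^sub>R axis i 1)) has_real_derivative partial f0 i p) (at 0)"
    by (rule DERIV_line_cong_open[OF o pV _ c1_deriv[OF V(3) pV]]) (use V(4) in blast)
  then show "((\<lambda>t. f (p + t *\<^sub>R axis i 1)) has_real_derivative partial f i p) (at 0)"
    by (simp add: eq)
qed

lemma c1_exp: assumes "c1 S f" shows "c1 S (\<lambda>p. exp (f p))"
proof (rule c1_intro)
  show "continuous_on S (\<lambda>p. exp (f p))" using assms by (auto intro!: continuous_intros dest: c1_cont)
  fix i show "\<exists>f'. continuous_on S f' \<and> (\<forall>p\<in>S. ((\<lambda>t. exp (f (p + t *\<^sub>R axis i 1))) has_real_derivative f' p) (at 0))"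
  proof (intro exI[of _ "\<lambda>p. exp (f p) * partial f i p"] conjI ballI)
    show "continuous_on S (\<lambda>p. exp (f p) * partial f i p)"
      using assms by (auto intro!: continuous_intros dest: c1_pcont c1_cont)
    fix p assume p: "p \<in> S"
    show "((\<lambda>t. exp (f (p + t *\<^sub>R axis i 1))) has_real_derivative exp (f p) * partial f i p) (at 0)"
      using DERIV_chain2[OF DERIV_exp c1_deriv[OF assms p, of i]] by simp
  qed
qed

lemma upd_nth: "upd ix q t $ k = (if k = ix then t else q $ k)"
  by (simp add: upd_def)

lemma upd_self: "upd ix q (q $ ix) = q"
  by (simp add: vec_eq_iff upd_def)

lemma upd_upd: "upd ix (upd ix q s) t = upd ix q t"
  by (simp add: vec_eq_iff upd_def)

lemma upd_line: "upd ix (q + s *\<^sub>R axis ix 1) = upd ix q"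
  by (auto simp: fun_eq_iff vec_eq_iff upd_def axis_def)

lemma upd_shift: "upd ix q (t + s) = upd ix q t + s *\<^sub>R axis ix 1"
  by (auto simp: vec_eq_iff upd_def axis_def)

lemma upd_other: "i \<noteq> ix \<Longrightarrow> upd ix (q + s *\<^sub>R axis i 1) t = upd ix q t + s *\<^sub>R axis i 1"
  by (auto simp: vec_eq_iff upd_def axis_def)

lemma continuous_upd: "continuous_on T (upd ix q)"
proof -
  have e: "upd ix q = (\<lambda>t. upd ix q 0 + t *\<^sub>R axis ix 1)"
    by (auto simp: fun_eq_iff vec_eq_iff upd_def axis_def)
  show ?thesis by (subst e) (intro continuous_intros)
qed

lemma line_DERIV:
  assumes "c1 S f" "upd ix q t \<in> S"
  shows "((\<lambda>\<tau>. f (upd ix q \<tau>)) has_real_derivative partial f ix (upd ix q t)) (at t)"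
proof -
  have "((\<lambda>s. f (upd ix q t + s *\<^sub>R axis ix 1)) has_real_derivative partial f ix (upd ix q t)) (at 0)"
    using c1_deriv[OF assms] .
  moreover have "\<And>s. upd ix q (s + t) = upd ix q t + s *\<^sub>R axis ix 1"
    by (auto simp: vec_eq_iff upd_def axis_def)
  ultimately have "((\<lambda>s. f (upd ix q (s + t))) has_real_derivative partial f ix (upd ix q t)) (at 0)"
    by simp
  then show ?thesis using DERIV_shift[of "\<lambda>s. f (upd ix q s)" _ 0 t] by simp
qed

lemma oint_0 [simp]: "oint 0 0 f = 0"
  by (simp add: oint_def)

lemma oint_split:
  fixes f :: "real \<Rightarrow> real"
  assumes "continuous_on {c..d} f" "c \<le> 0" "0 \<le> d" "t \<in> {c..d}"
  shows "oint 0 t f = integral {c..t} f - integral {c..0} f"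
proof (cases "0 \<le> t")
  case True
  have "f integrable_on {c..t}"
    using assms by (intro integrable_continuous_real continuous_on_subset[OF assms(1)]) auto
  then have "integral {c..0} f + integral {0..t} f = integral {c..t} f"
    using assms True Henstock_Kurzweil_Integration.integral_combine[where a=c and c=0 and b=t and f=f] by auto
  then show ?thesis using True by (simp add: oint_def)
next
  case False
  have "f integrable_on {c..0}"
    using assms by (intro integrable_continuous_real continuous_on_subset[OF assms(1)]) auto
  then have "integral {c..t} f + integral {t..0} f = integral {c..0} f"
    using assms False Henstock_Kurzweil_Integration.integral_combine[where a=c and c=t and b=0 and f=f] by auto
  then show ?thesis using False by (simp add: oint_def)
qed

lemma oint_DERIV:
  fixes f :: "real \<Rightarrow> real"
  assumes cont: "continuous_on {a<..<b} f" and ab: "a < 0" "0 < b" and x: "x \<in> {a<..<b}"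
  shows "((\<lambda>t. oint 0 t f) has_real_derivative f x) (at x)"
proof -
  define c where "c = (a + min 0 x) / 2"
  define d where "d = (b + max 0 x) / 2"
  have cd: "a < c" "c < min 0 x" "max 0 x < d" "d < b" using ab x by (auto simp: c_def d_def)
  have cc: "continuous_on {c..d} f" using cd by (intro continuous_on_subset[OF cont]) auto
  have "((\<lambda>t. integral {c..t} f) has_real_derivative f x) (at x within {c..d})"
    using cd by (intro integral_has_real_derivative cc) auto
  then have "((\<lambda>t. integral {c..t} f) has_real_derivative f x) (at x within {c<..<d})"
    by (rule DERIV_subset) auto
  moreover have "at x within {c<..<d} = at x" using cd by (intro at_within_open) auto
  ultimately have "((\<lambda>t. integral {c..t} f) has_real_derivative f x) (at x)"
    by simp
  then have D: "((\<lambda>t. integral {c..t} f - integral {c..0} f) has_real_derivative f x) (at x)"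
    using DERIV_diff[OF _ DERIV_const[of "integral {c..0} f"]] by simp
  have ev: "eventually (\<lambda>t. t \<in> {c<..<d}) (nhds x)"
    using cd by (intro eventually_nhds_in_open) auto
  have eq: "\<And>t. t \<in> {c<..<d} \<Longrightarrow> oint 0 t f = integral {c..t} f - integral {c..0} f"
    using cd by (intro oint_split[OF cc]) auto
  show ?thesis
    by (rule DERIV_cong_ev[OF refl eventually_mono[OF ev] refl, THEN iffD2, OF _ D])
       (simp add: eq)
qed

lemma oint_bound:
  fixes f :: "real \<Rightarrow> real"
  assumes "continuous_on (closed_segment 0 t) f" "\<And>s. s \<in> closed_segment 0 t \<Longrightarrow> \<bar>f s\<bar> \<le> B"
  shows "\<bar>oint 0 t f\<bar> \<le> B * \<bar>t\<bar>"
proof (cases "0 \<le> t")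
  case True
  then have cs: "closed_segment 0 t = {0..t}" by (simp add: closed_segment_eq_real_ivl)
  have "norm (integral {0..t} f) \<le> B * (t - 0)"
    using assms True by (intro integral_bound) (auto simp: cs)
  then show ?thesis using True by (simp add: oint_def)
next
  case False
  then have cs: "closed_segment 0 t = {t..0}" by (simp add: closed_segment_eq_real_ivl)
  have "norm (integral {t..0} f) \<le> B * (0 - t)"
    using assms False by (intro integral_bound) (auto simp: cs)
  then show ?thesis using False by (simp add: oint_def)
qed

locale thm9 =
  fixes ix :: "'n::finite" and r :: real and lo hi :: "real^'n"
    and g :: "real^'n \<Rightarrow> real^'n^'n" and W :: "real^'n \<Rightarrow> (real^'n) set"
    and h :: "real^'n \<Rightarrow> real" and \<Omega> :: "(real^'n) set"
  assumes \<Omega>_def: "\<Omega> = box lo hi"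
  and r: "r > 0" "lo $ ix = - r" "hi $ ix = r"
    and box0: "\<forall>k. lo $ k < 0 \<and> 0 < hi $ k"
    and g_smooth: "\<forall>i j. smooth_on \<Omega> (\<lambda>q. g q $ i $ j)"
    and g_sym: "\<forall>q\<in>\<Omega>. transpose (g q) = g q"
    and g_pos: "\<forall>q\<in>\<Omega>. pos_def (g q)"
    and W_sub: "\<forall>q\<in>\<Omega>. subspace (W q) \<and> dim (W q) = CARD('n) - 1"
    and W_compl: "\<forall>q\<in>\<Omega>. W q \<inter> What g ix q = {0}
                      \<and> {a + b | a b. a \<in> W q \<and> b \<in> What g ix q} = UNIV"
    and W_smooth: "\<forall>q\<in>\<Omega>. \<exists>V F. open V \<and> q \<in> V \<and>
                     (\<forall>p\<in>V \<inter> \<Omega>. W p = span ((\<lambda>a. F a p) ` (UNIV - {ix}))) \<and>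
                     (\<forall>a k. smooth_on V (\<lambda>p. (F a p :: real^'n) $ k))"
    and h_smooth: "smooth_on \<Omega> h"
begin

lemma open_\<Omega>: "open \<Omega>" by (simp add: \<Omega>_def open_box)

lemma zero_\<Omega>: "0 \<in> \<Omega>" using box0 by (simp add: \<Omega>_def mem_box_cart)

lemma ix_range: assumes "q \<in> \<Omega>" shows "q $ ix \<in> {-r<..<r}"
proof -
  have "lo $ ix < q $ ix \<and> q $ ix < hi $ ix" using assms by (simp add: \<Omega>_def mem_box_cart)
  then show ?thesis using r by simp
qed

lemma upd_in: "q \<in> \<Omega> \<Longrightarrow> t \<in> {-r<..<r} \<Longrightarrow> upd ix q t \<in> \<Omega>"
  using r by (auto simp: \<Omega>_def mem_box_cart upd_def)

lemma g_c1: "c1 \<Omega> (\<lambda>q. g q $ i $ j)" using g_smooth smooth_c1 by blast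

abbreviation B where "B q \<equiv> matrix_inv (g q)"
abbreviation s1 where "s1 q \<equiv> sigma1 g ix q"

lemma g_inv: assumes q: "q \<in> \<Omega>" shows "g q ** B q = mat 1" "B q ** g q = mat 1"
proof -
  have inj: "inj ((*v) (g q))"
  proof (rule inj_onI)
    fix x y assume "g q *v x = g q *v y"
    then have "g q *v (x - y) = 0" by (simp add: matrix_vector_mult_diff_distrib)
    then have "(x - y) \<bullet> (g q *v (x - y)) = 0" by simp
    then show "x = y" using g_pos q unfolding pos_def_def by (metis less_irrefl right_minus_eq)
  qed
  then obtain B' where "B' ** g q = mat 1" using matrix_left_invertible_injective by blast
  then have "invertible (g q)" unfolding invertible_def using matrix_left_right_inverse by blast
  then show "g q ** B q = mat 1" "B q ** g q = mat 1"
    unfolding invertible_def matrix_inv_def by (metis (mono_tags, lifting) someI_ex)+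
qed

lemma det_g: "q \<in> \<Omega> \<Longrightarrow> det (g q) \<noteq> 0"
  using g_inv invertible_def invertible_det_nz by blast

lemma B_sym: assumes q: "q \<in> \<Omega>" shows "transpose (B q) = B q"
proof -
  have "transpose (B q) ** g q = mat 1"
    using g_inv(1)[OF q] g_sym q by (metis matrix_transpose_mul transpose_mat)
  then have "transpose (B q) = transpose (B q) ** (g q ** B q)" using g_inv(1)[OF q] by simp
  also have "\<dots> = B q" by (simp add: matrix_mul_assoc \<open>transpose (B q) ** g q = mat 1\<close>)
  finally show ?thesis .
qed

lemma mv_axis: "(A *v axis j 1) $ k = A $ k $ (j::'n)" for A :: "real^'n^'n"
  by (simp add: matrix_vector_mult_def axis_def if_distrib cong: if_cong)

lemma Hc_eq: "Hc g q i j = g q $ j $ i"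
  by (simp add: Hc_def mv_axis)

lemma s1_eq: "s1 q = g q *v axis ix 1"
  by (simp add: sigma1_def Hc_def vec_lambda_eta)

lemma B_s1: "q \<in> \<Omega> \<Longrightarrow> B q *v s1 q = axis ix 1"
  by (simp add: s1_eq matrix_vector_mul_assoc g_inv)

lemma s1_nz: "q \<in> \<Omega> \<Longrightarrow> s1 q \<noteq> 0"
  using B_s1 by (metis axis_eq_0_iff matrix_vector_mult_0_right zero_neq_one)

lemma What_eq: "What g ix q = range (\<lambda>c. c *\<^sub>R s1 q)"
  by (simp add: What_def span_singleton s1_eq scalar_mult_eq_scaleR image_image matrix_vector_mult_scaleR)

lemma subspace_What: "subspace (What g ix q)"
proof -
  have "What g ix q = span {s1 q}" by (simp add: What_eq span_singleton scalar_mult_eq_scaleR)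
  then show ?thesis by simp
qed

lemma phat_unique:
  assumes q: "q \<in> \<Omega>" and b: "\<beta> \<in> What g ix q" "\<alpha> - \<beta> \<in> W q"
  shows "phat g ix W q \<alpha> = \<beta>"
  unfolding phat_def
proof (rule the_equality)
  show "\<beta> \<in> What g ix q \<and> \<alpha> - \<beta> \<in> W q" using b by blast
  fix \<beta>' assume b': "\<beta>' \<in> What g ix q \<and> \<alpha> - \<beta>' \<in> W q"
  have sW: "subspace (W q)" using W_sub q by blast
  have "\<beta> - \<beta>' \<in> W q" using subspace_diff[OF sW b'[THEN conjunct2] b(2)] by simp
  moreover have "\<beta> - \<beta>' \<in> What g ix q" using subspace_diff[OF subspace_What b(1) b'[THEN conjunct1]] .
  ultimately have "\<beta> - \<beta>' = 0" using W_compl q by blast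
  then show "\<beta>' = \<beta>" by simp
qed

lemma phat_props:
  assumes q: "q \<in> \<Omega>"
  shows "phat g ix W q \<alpha> \<in> What g ix q" "\<alpha> - phat g ix W q \<alpha> \<in> W q"
proof -
  obtain a b where ab: "\<alpha> = a + b" "a \<in> W q" "b \<in> What g ix q" using W_compl q by blast
  have "phat g ix W q \<alpha> = b" using phat_unique[OF q ab(3)] ab by simp
  then show "phat g ix W q \<alpha> \<in> What g ix q" "\<alpha> - phat g ix W q \<alpha> \<in> W q" using ab by auto
qed

lemma scale_s1_cancel: "q \<in> \<Omega> \<Longrightarrow> a *\<^sub>R s1 q = b *\<^sub>R s1 q \<longleftrightarrow> a = b"
  using s1_nz by (simp add: scaleR_cancel_right)

lemma Phat_eq: assumes q: "q \<in> \<Omega>" shows "phat g ix W q (axis k 1) = Phat g ix W k q *\<^sub>R s1 q"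
proof -
  have "phat g ix W q (axis k 1) \<in> range (\<lambda>c. c *\<^sub>R s1 q)" using phat_props(1)[OF q] What_eq by simp
  then obtain c where c: "phat g ix W q (axis k 1) = c *\<^sub>R s1 q" by blast
  have "Phat g ix W k q = c" unfolding Phat_def
    by (rule the_equality) (use c scale_s1_cancel[OF q] in auto)
  then show ?thesis using c by simp
qed

definition cf where "cf q \<alpha> = (\<Sum>k\<in>UNIV. \<alpha> $ k * Phat g ix W k q)"

lemma axis_expand: "(\<Sum>k\<in>UNIV. (\<alpha> $ k) *\<^sub>R axis k (1::real)) = \<alpha>"
  using basis_expansion[of \<alpha>] by (simp add: scalar_mult_eq_scaleR)

lemma phat_lin: assumes q: "q \<in> \<Omega>" shows "phat g ix W q \<alpha> = cf q \<alpha> *\<^sub>R s1 q"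
proof (rule phat_unique[OF q])
  show "cf q \<alpha> *\<^sub>R s1 q \<in> What g ix q" unfolding What_eq by (rule rangeI)
  have sW: "subspace (W q)" using W_sub q by blast
  have "\<alpha> - cf q \<alpha> *\<^sub>R s1 q = (\<Sum>k\<in>UNIV. (\<alpha> $ k) *\<^sub>R (axis k 1 - phat g ix W q (axis k 1)))"
    by (simp add: Phat_eq[OF q] cf_def scaleR_diff_right sum_subtractf scaleR_sum_left axis_expand)
  also have "\<dots> \<in> W q"
    by (intro subspace_sum[OF sW] subspace_scale[OF sW] phat_props(2)[OF q])
  finally show "\<alpha> - cf q \<alpha> *\<^sub>R s1 q \<in> W q" .
qed

lemma cf_s1: assumes q: "q \<in> \<Omega>" shows "cf q (s1 q) = 1"
proof -
  have sW: "subspace (W q)" using W_sub q by blast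
  have "phat g ix W q (s1 q) = s1 q"
  proof (rule phat_unique[OF q])
    show "s1 q \<in> What g ix q" unfolding What_eq using rangeI[of "\<lambda>c. c *\<^sub>R s1 q" 1] by simp
    show "s1 q - s1 q \<in> W q" using subspace_0[OF sW] by simp
  qed
  then have "cf q (s1 q) *\<^sub>R s1 q = 1 *\<^sub>R s1 q" using phat_lin[OF q] by simp
  then show ?thesis using scale_s1_cancel[OF q] by blast
qed

lemma cf_scale: "cf q (c *\<^sub>R \<alpha>) = c * cf q \<alpha>"
  by (simp add: cf_def sum_distrib_left mult.assoc)

lemma cf_line: "cf q (\<alpha> + t *\<^sub>R axis i 1) = cf q \<alpha> + t * Phat g ix W i q"
proof -
  have "\<And>k. (\<alpha> + t *\<^sub>R axis i 1) $ k * Phat g ix W k q = \<alpha> $ k * Phat g ix W k q + (if k = i then t * Phat g ix W i q else 0)"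
    by (simp add: axis_def algebra_simps)
  then show ?thesis by (simp add: cf_def sum.distrib)
qed

lemma Kform_s1: "q \<in> \<Omega> \<Longrightarrow> Kform g ix K q (c *\<^sub>R s1 q) = 1/2 * K q * c^2"
proof -
  assume q: "q \<in> \<Omega>"
  have "(THE a. c *\<^sub>R s1 q = a *\<^sub>R s1 q) = c"
    by (rule the_equality) (use scale_s1_cancel[OF q] in auto)
  then show ?thesis by (simp add: Kform_def)
qed

lemma KP_eq: "q \<in> \<Omega> \<Longrightarrow> KP g ix W K q \<alpha> = 1/2 * K q * (cf q \<alpha>)^2"
  by (simp add: KP_def phat_lin Kform_s1)

lemma hamil_eq: "hamil g q \<alpha> = 1/2 * (\<alpha> \<bullet> (B q *v \<alpha>))"
  by (simp add: hamil_def FH_def)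

lemma FH_s1: "q \<in> \<Omega> \<Longrightarrow> FH g q (c *\<^sub>R s1 q) = c *\<^sub>R axis ix 1"
  by (simp add: FH_def matrix_vector_mult_scaleR B_s1)

end

context thm9 begin

lemma Phat_local:
  assumes q0: "q0 \<in> \<Omega>"
  shows "\<exists>V N D. open V \<and> q0 \<in> V \<and> c1 (V\<inter>\<Omega>) N \<and> c1 (V\<inter>\<Omega>) D \<and>
           (\<forall>p\<in>V\<inter>\<Omega>. D p \<noteq> 0 \<and> Phat g ix W k p = N p / D p)"
proof -
  obtain V F where V: "open V" "q0 \<in> V" and WF: "\<forall>p\<in>V \<inter> \<Omega>. W p = span ((\<lambda>a. F a p) ` (UNIV - {ix}))"
    and Fs: "\<forall>a k. smooth_on V (\<lambda>p. (F a p :: real^'n) $ k)"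
    using bspec[OF W_smooth q0] by (elim exE conjE)
  define M where "M p = (\<chi> i j. if j = ix then g p $ i $ ix else F j p $ i)" for p
  define N where "N p = det (\<chi> i j. if j = ix then axis k 1 $ i else M p $ i $ j)" for p
  define D where "D p = det (M p)" for p
  have cF: "c1 (V\<inter>\<Omega>) (\<lambda>p. F a p $ i)" for a i
    using smooth_c1[of V] Fs c1_subset by blast
  have cg: "c1 (V\<inter>\<Omega>) (\<lambda>p. g p $ i $ j)" for i j
    using g_c1 c1_subset by blast
  have cM: "c1 (V\<inter>\<Omega>) (\<lambda>p. M p $ i $ j)" for i j
    unfolding M_def by (cases "j = ix") (simp_all add: cF cg)
  have cD: "c1 (V\<inter>\<Omega>) D" unfolding D_def by (rule c1_det[OF cM])
  have cN: "c1 (V\<inter>\<Omega>) N" unfolding N_def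
    by (rule c1_det, case_tac "j = ix") (simp_all add: cM c1_const)
  have pt: "D p \<noteq> 0 \<and> Phat g ix W k p = N p / D p" if p: "p \<in> V \<inter> \<Omega>" for p
  proof -
    have pO: "p \<in> \<Omega>" using p by blast
    have col: "column j (M p) = (if j = ix then s1 p else F j p)" for j
      by (auto simp: column_def M_def vec_eq_iff s1_eq mv_axis)
    have "span (columns (M p)) = UNIV"
    proof (rule set_eqI, rule iffI)
      fix b :: "real^'n" assume "b \<in> UNIV"
      obtain a \<beta> where ab: "b = a + \<beta>" "a \<in> W p" "\<beta> \<in> What g ix p" using W_compl pO by blast
      have sub: "(\<lambda>a. F a p) ` (UNIV - {ix}) \<subseteq> columns (M p)"
      proof (rule image_subsetI)
        fix a assume a: "a \<in> UNIV - {ix}"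
        then have "F a p = column a (M p)" using col[of a] by simp
        then show "F a p \<in> columns (M p)" unfolding columns_def by blast
      qed
      have aS: "a \<in> span (columns (M p))" using ab(2) WF p span_mono[OF sub] by blast
      obtain c where bc: "\<beta> = c *\<^sub>R s1 p" using ab(3) unfolding What_eq by blast
      have "s1 p = column ix (M p)" using col[of ix] by simp
      then have "s1 p \<in> columns (M p)" unfolding columns_def by blast
      then show "b \<in> span (columns (M p))"
        unfolding ab(1) bc by (intro span_add[OF aS] span_scale span_base)
    qed simp
    then have "vec.span (columns (M p)) = UNIV" by (simp add: span_vec_eq)
    then obtain B' where B': "M p ** B' = mat 1"
      using matrix_right_invertible_span_columns[of "M p"] by blast
    then have "invertible (M p)" unfolding invertible_def using matrix_left_right_inverse by blast
    then have dz: "D p \<noteq> 0" unfolding D_def using invertible_det_nz by blast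
    define x where "x = B' *v axis k 1"
    have Mx: "M p *v x = axis k 1" by (simp add: x_def matrix_vector_mul_assoc B')
    then have "x = (\<chi> kk. det (\<chi> i j. if j = kk then axis k 1 $ i else M p $ i $ j) / det (M p))"
      using cramer[of "M p" x "axis k 1"] dz unfolding D_def by blast
    then have xix: "x $ ix = N p / D p" by (simp add: N_def D_def)
    have "M p *v x = (\<Sum>j\<in>UNIV. x $ j *\<^sub>R column j (M p))"
      by (simp add: matrix_mult_sum scalar_mult_eq_scaleR)
    also have "\<dots> = x $ ix *\<^sub>R s1 p + (\<Sum>j\<in>UNIV - {ix}. x $ j *\<^sub>R F j p)"
      by (simp add: sum.remove[of UNIV ix] col)
    finally have "axis k 1 - x $ ix *\<^sub>R s1 p = (\<Sum>j\<in>UNIV - {ix}. x $ j *\<^sub>R F j p)"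
      using Mx by simp
    also have "\<dots> \<in> span ((\<lambda>a. F a p) ` (UNIV - {ix}))"
      by (rule span_sum, rule span_scale, rule span_base) blast
    also have "\<dots> = W p" using WF p by simp
    finally have wW: "axis k 1 - x $ ix *\<^sub>R s1 p \<in> W p" .
    have "x $ ix *\<^sub>R s1 p \<in> What g ix p" unfolding What_eq by (rule rangeI)
    then have "phat g ix W p (axis k 1) = x $ ix *\<^sub>R s1 p"
      using phat_unique[OF pO _ wW] by blast
    then have "Phat g ix W k p *\<^sub>R s1 p = x $ ix *\<^sub>R s1 p" by (simp only: Phat_eq[OF pO])
    then have "Phat g ix W k p = x $ ix" using scale_s1_cancel[OF pO] by blast
    then show ?thesis using dz xix by argo
  qed
  show ?thesis
    apply (rule exI[of _ V], rule exI[of _ N], rule exI[of _ D])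
    using V cN cD pt by simp
qed

lemma Phat_c1: "c1 \<Omega> (Phat g ix W k)"
proof (rule c1_local[OF open_\<Omega>])
  fix p assume pO: "p \<in> \<Omega>"
  obtain V N D where V: "open V \<and> p \<in> V \<and> c1 (V\<inter>\<Omega>) N \<and> c1 (V\<inter>\<Omega>) D \<and>
     (\<forall>p\<in>V\<inter>\<Omega>. D p \<noteq> 0 \<and> Phat g ix W k p = N p / D p)" using Phat_local[OF pO, of k] by blast
  have cND: "c1 (V\<inter>\<Omega>) (\<lambda>p. N p / D p)" using V by (intro c1_divide) auto
  show "\<exists>V f0. open V \<and> p \<in> V \<and> c1 (V \<inter> \<Omega>) f0 \<and> (\<forall>x\<in>V \<inter> \<Omega>. Phat g ix W k x = f0 x)"
    apply (rule exI[of _ V], rule exI[of _ "\<lambda>p. N p / D p"])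
    using V cND by simp
qed

lemma w_c1: "c1 \<Omega> (\<lambda>p. (B p *v \<sigma>) $ k)"
proof (rule c1_local[OF open_\<Omega>])
  fix q assume "q \<in> \<Omega>"
  have eq: "(B p *v \<sigma>) $ k = det (\<chi> i j. if j = k then \<sigma> $ i else g p $ i $ j) / det (g p)" if p: "p \<in> \<Omega>" for p
  proof -
    have "g p *v (B p *v \<sigma>) = \<sigma>" using g_inv[OF p] by (simp add: matrix_vector_mul_assoc)
    then have "B p *v \<sigma> = (\<chi> k. det (\<chi> i j. if j = k then \<sigma> $ i else g p $ i $ j) / det (g p))"
      using cramer[of "g p"] det_g[OF p] by blast
    then show ?thesis by simp
  qed
  have cD: "c1 \<Omega> (\<lambda>p. det (\<chi> i j. if j = k then \<sigma> $ i else g p $ i $ j) / det (g p))"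
  proof (rule c1_divide)
    show "c1 \<Omega> (\<lambda>p. det (\<chi> i j. if j = k then \<sigma> $ i else g p $ i $ j))"
      by (rule c1_det, case_tac "j = k") (simp_all add: c1_const g_c1)
    show "c1 \<Omega> (\<lambda>p. det (g p))" by (rule c1_det) (rule g_c1)
    show "\<forall>p\<in>\<Omega>. det (g p) \<noteq> 0" using det_g by blast
  qed
  show "\<exists>V f0. open V \<and> q \<in> V \<and> c1 (V \<inter> \<Omega>) f0 \<and> (\<forall>x\<in>V \<inter> \<Omega>. (B x *v \<sigma>) $ k = f0 x)"
    apply (rule exI[of _ UNIV], rule exI[of _ "\<lambda>p. det (\<chi> i j. if j = k then \<sigma> $ i else g p $ i $ j) / det (g p)"])
    using cD eq \<open>q \<in> \<Omega>\<close> by simp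
qed

end

lemma inner_mv_transpose: "(x::real^'n) \<bullet> (A *v y) = (transpose A *v x) \<bullet> y" for A :: "real^'n^'n"
  apply (simp add: inner_vec_def matrix_vector_mult_def transpose_def sum_distrib_left sum_distrib_right)
  apply (subst sum.swap)
  apply (simp add: mult_ac)
  done

context thm9 begin

lemma B_sigma: "q \<in> \<Omega> \<Longrightarrow> B q *v (c *\<^sub>R s1 q) = c *\<^sub>R axis ix 1"
  by (simp add: matrix_vector_mult_scaleR B_s1)

lemma partial_hamil_fiber:
  assumes q: "q \<in> \<Omega>"
  shows "partial (hamil g q) i (c *\<^sub>R s1 q) = (if i = ix then c else 0)"
proof -
  define \<sigma> where "\<sigma> = c *\<^sub>R s1 q"
  define k0 where "k0 = (if i = ix then c else (0::real))"
  define d where "d = axis i 1 \<bullet> (B q *v axis i 1)"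
  have Bs: "B q *v \<sigma> = c *\<^sub>R axis ix 1" using B_sigma[OF q] by (simp add: \<sigma>_def)
  have e1: "\<sigma> \<bullet> (B q *v axis i 1) = k0"
  proof -
    have "\<sigma> \<bullet> (B q *v axis i 1) = (B q *v \<sigma>) \<bullet> axis i 1"
      using B_sym[OF q] inner_mv_transpose[of \<sigma> "B q" "axis i 1"] by simp
    also have "\<dots> = k0" unfolding Bs inner_axis by (simp add: k0_def axis_def)
    finally show ?thesis .
  qed
  have e2: "axis i 1 \<bullet> (B q *v \<sigma>) = k0"
    unfolding Bs inner_axis' by (simp add: k0_def axis_def)
  have eq: "hamil g q (\<sigma> + t *\<^sub>R axis i 1) = 1/2 * (\<sigma> \<bullet> (B q *v \<sigma>)) + t * k0 + t^2 * (1/2 * d)" for t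
  proof -
    have "(\<sigma> + t *\<^sub>R axis i 1) \<bullet> (B q *v (\<sigma> + t *\<^sub>R axis i 1))
        = \<sigma> \<bullet> (B q *v \<sigma>) + t * (\<sigma> \<bullet> (B q *v axis i 1)) + t * (axis i 1 \<bullet> (B q *v \<sigma>)) + t^2 * d"
      by (simp add: matrix_vector_right_distrib matrix_vector_mult_scaleR inner_add_left inner_add_right d_def
          power2_eq_square algebra_simps)
    then show ?thesis by (simp add: hamil_eq e1 e2 algebra_simps)
  qed
  have "((\<lambda>t. 1/2 * (\<sigma> \<bullet> (B q *v \<sigma>)) + t * k0 + t^2 * (1/2 * d)) has_real_derivative k0) (at 0)"
    by (auto intro!: derivative_eq_intros)
  then have "((\<lambda>t. hamil g q (\<sigma> + t *\<^sub>R axis i 1)) has_real_derivative k0) (at 0)"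
    by (simp add: eq)
  then show ?thesis unfolding \<sigma>_def k0_def by (rule partial_DERIV)
qed

lemma cf_sigma: "q \<in> \<Omega> \<Longrightarrow> cf q (c *\<^sub>R s1 q) = c"
  by (simp add: cf_scale cf_s1)

lemma partial_KP_fiber:
  assumes q: "q \<in> \<Omega>"
  shows "partial (KP g ix W K q) i (c *\<^sub>R s1 q) = K q * c * Phat g ix W i q"
proof -
  have eq: "KP g ix W K q (c *\<^sub>R s1 q + t *\<^sub>R axis i 1) = 1/2 * K q * (c + t * Phat g ix W i q)^2" for t
    by (simp add: KP_eq[OF q] cf_line cf_sigma[OF q])
  have "((\<lambda>t. 1/2 * K q * (c + t * Phat g ix W i q)^2) has_real_derivative K q * c * Phat g ix W i q) (at 0)"
    by (auto intro!: derivative_eq_intros)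
  then show ?thesis by (intro partial_DERIV) (simp add: eq)
qed

end

context thm9 begin

lemma mv_nth: "(A *v x) $ j = (\<Sum>k\<in>UNIV. A $ j $ k * x $ k)" for A :: "real^'n^'n"
  by (simp add: matrix_vector_mult_def)

lemma s1_nth: "s1 q $ k = g q $ k $ ix"
  by (simp add: s1_eq mv_axis)

lemma partial_const: "partial (\<lambda>p. a) i q = 0"
  by (rule partial_DERIV) simp

lemma partial_hamil_base:
  assumes q: "q \<in> \<Omega>"
  shows "partial (\<lambda>q'. hamil g q' (c *\<^sub>R s1 q)) i q = - 1/2 * c^2 * partial (\<lambda>p. g p $ ix $ ix) i q"
proof -
  define \<sigma> where "\<sigma> = c *\<^sub>R s1 q"
  define w where "w k p = (B p *v \<sigma>) $ k" for k p
  define w' where "w' k = partial (w k) i q" for k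
  define gd where "gd j k = partial (\<lambda>p. g p $ j $ k) i q" for j k
  have cw: "c1 \<Omega> (w k)" for k unfolding w_def by (rule w_c1)
  have wq: "w k q = c * axis ix 1 $ k" for k
    using B_sigma[OF q] by (simp add: w_def \<sigma>_def)
  have key: "(\<Sum>k\<in>UNIV. gd j k * w k q + g q $ j $ k * w' k) = 0" for j
  proof -
    define Fj where "Fj p = (\<Sum>k\<in>UNIV. g p $ j $ k * w k p)" for p
    have Fc: "Fj p = \<sigma> $ j" if p: "p \<in> \<Omega>" for p
    proof -
      have "g p *v (B p *v \<sigma>) = \<sigma>" using g_inv[OF p] by (simp add: matrix_vector_mul_assoc)
      then show ?thesis unfolding Fj_def w_def by (metis mv_nth)
    qed
    have dk: "((\<lambda>t. g (q + t *\<^sub>R axis i 1) $ j $ k * w k (q + t *\<^sub>R axis i 1)) has_real_derivative gd j k * w k q + g q $ j $ k * w' k) (at 0)" for k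
      using DERIV_mult[OF c1_deriv[OF g_c1 q, of i j k] c1_deriv[OF cw q, of k i]] by (simp add: gd_def w'_def mult.commute)
    have "((\<lambda>t. Fj (q + t *\<^sub>R axis i 1)) has_real_derivative (\<Sum>k\<in>UNIV. gd j k * w k q + g q $ j $ k * w' k)) (at 0)"
      unfolding Fj_def by (rule DERIV_sum) (rule dk)
    then have "partial Fj i q = (\<Sum>k\<in>UNIV. gd j k * w k q + g q $ j $ k * w' k)" by (rule partial_DERIV)
    moreover have "partial Fj i q = partial (\<lambda>p. \<sigma> $ j) i q"
      by (rule partial_cong_open[OF open_\<Omega> q]) (rule Fc)
    ultimately show ?thesis by (simp add: partial_const)
  qed
  have key2: "(\<Sum>k\<in>UNIV. g q $ ix $ k * w' k) = - c * gd ix ix"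
  proof -
    have "(\<Sum>k\<in>UNIV. g q $ ix $ k * w' k) = - (\<Sum>k\<in>UNIV. gd ix k * w k q)"
      using key[of ix] unfolding sum.distrib by linarith
    also have "(\<Sum>k\<in>UNIV. gd ix k * w k q) = (\<Sum>k\<in>UNIV. if k = ix then gd ix ix * c else 0)"
      by (rule sum.cong) (auto simp: wq axis_def)
    also have "\<dots> = gd ix ix * c" by simp
    finally show ?thesis by simp
  qed
  have sym: "g q $ k $ ix = g q $ ix $ k" for k
  proof -
    have "transpose (g q) $ ix $ k = g q $ ix $ k" using g_sym q by simp
    then show ?thesis by (simp add: transpose_def)
  qed
  have sig: "(\<Sum>k\<in>UNIV. \<sigma> $ k * w' k) = - (c * c) * gd ix ix"
  proof -
    have "(\<Sum>k\<in>UNIV. \<sigma> $ k * w' k) = (\<Sum>k\<in>UNIV. c * (g q $ ix $ k * w' k))"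
      by (rule sum.cong) (simp_all add: \<sigma>_def s1_nth sym[symmetric])
    also have "\<dots> = c * (\<Sum>k\<in>UNIV. g q $ ix $ k * w' k)" by (simp add: sum_distrib_left)
    finally show ?thesis using key2 by simp
  qed
  have hp: "hamil g p \<sigma> = 1/2 * (\<Sum>k\<in>UNIV. \<sigma> $ k * w k p)" for p
    by (simp add: hamil_eq w_def inner_vec_def)
  have "((\<lambda>t. 1/2 * (\<Sum>k\<in>UNIV. \<sigma> $ k * w k (q + t *\<^sub>R axis i 1))) has_real_derivative 1/2 * (\<Sum>k\<in>UNIV. \<sigma> $ k * w' k)) (at 0)"
    unfolding w'_def by (intro DERIV_cmult DERIV_sum c1_deriv[OF cw q])
  then have "((\<lambda>t. hamil g (q + t *\<^sub>R axis i 1) \<sigma>) has_real_derivative 1/2 * (\<Sum>k\<in>UNIV. \<sigma> $ k * w' k)) (at 0)"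
    by (simp add: hp)
  then have "partial (\<lambda>q'. hamil g q' \<sigma>) i q = 1/2 * (- (c * c) * gd ix ix)"
    using sig by (intro partial_DERIV) simp
  then show ?thesis by (simp add: \<sigma>_def gd_def power2_eq_square)
qed

lemma partial_KP_base:
  assumes q: "q \<in> \<Omega>" and K: "c1 \<Omega> K"
  shows "partial (\<lambda>q'. KP g ix W K q' (c *\<^sub>R s1 q)) ix q
     = 1/2 * partial K ix q * c^2 + K q * c * (\<Sum>k\<in>UNIV. (c *\<^sub>R s1 q) $ k * partial (Phat g ix W k) ix q)"
proof -
  define \<sigma> where "\<sigma> = c *\<^sub>R s1 q"
  define S where "S p = (\<Sum>k\<in>UNIV. \<sigma> $ k * Phat g ix W k p)" for p
  define S' where "S' = (\<Sum>k\<in>UNIV. \<sigma> $ k * partial (Phat g ix W k) ix q)"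
  have Sq: "S q = c" using cf_sigma[OF q] by (simp add: S_def cf_def \<sigma>_def)
  have dS: "((\<lambda>t. S (q + t *\<^sub>R axis ix 1)) has_real_derivative S') (at 0)"
    unfolding S_def S'_def by (intro DERIV_sum DERIV_cmult c1_deriv[OF Phat_c1 q])
  have dK: "((\<lambda>t. K (q + t *\<^sub>R axis ix 1)) has_real_derivative partial K ix q) (at 0)"
    by (rule c1_deriv[OF K q])
  have "((\<lambda>t. 1/2 * K (q + t *\<^sub>R axis ix 1) * (S (q + t *\<^sub>R axis ix 1))^2) has_real_derivative
          1/2 * partial K ix q * (S q)^2 + 1/2 * K q * (2 * S q * S')) (at 0)"
    using DERIV_mult[OF DERIV_cmult[OF dK, of "1/2"] DERIV_power[OF dS, of 2]]
    by (simp add: algebra_simps)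
  then have D: "((\<lambda>t. 1/2 * K (q + t *\<^sub>R axis ix 1) * (S (q + t *\<^sub>R axis ix 1))^2) has_real_derivative
          1/2 * partial K ix q * c^2 + K q * c * S') (at 0)"
    by (simp add: Sq algebra_simps)
  have "((\<lambda>t. KP g ix W K (q + t *\<^sub>R axis ix 1) \<sigma>) has_real_derivative 1/2 * partial K ix q * c^2 + K q * c * S') (at 0)"
  proof (rule DERIV_line_cong_open[OF open_\<Omega> q _ D])
    fix y assume "y \<in> \<Omega>"
    then show "KP g ix W K y \<sigma> = 1/2 * K y * (S y)^2" by (simp add: KP_eq S_def cf_def)
  qed
  then show ?thesis unfolding \<sigma>_def S'_def by (intro partial_DERIV)
qed

end

context thm9 begin

lemma partial_PP:
  assumes q: "q \<in> \<Omega>"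
  shows "partial (\<lambda>q'. Phat g ix W i q' * Phat g ix W j q') ix q
     = partial (Phat g ix W i) ix q * Phat g ix W j q + Phat g ix W i q * partial (Phat g ix W j) ix q"
  using DERIV_mult[OF c1_deriv[OF Phat_c1 q, of i ix] c1_deriv[OF Phat_c1 q, of j ix]]
  by (intro partial_DERIV) (simp add: mult.commute)

lemma sumPg: "q \<in> \<Omega> \<Longrightarrow> (\<Sum>j\<in>UNIV. Phat g ix W j q * g q $ j $ ix) = 1"
  using cf_s1[of q] by (simp add: cf_def s1_nth mult.commute)

lemma Gfun_eq:
  assumes q: "q \<in> \<Omega>"
  shows "Gfun g ix W q = (\<Sum>i\<in>UNIV. partial (\<lambda>p. g p $ ix $ ix) i q * Phat g ix W i q)
            + 2 * (\<Sum>i\<in>UNIV. partial (Phat g ix W i) ix q * g q $ i $ ix)"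
proof -
  define P where "P i = Phat g ix W i q" for i
  define P' where "P' i = partial (Phat g ix W i) ix q" for i
  define gd where "gd i = partial (\<lambda>p. g p $ ix $ ix) i q" for i
  define gg where "gg i = g q $ i $ ix" for i
  have Hc1: "(\<lambda>q'. Hc g q' ix ix) = (\<lambda>p. g p $ ix $ ix)" by (simp add: Hc_eq)
  have A: "(\<Sum>i\<in>UNIV. gd i * P i) = gd ix * P ix + (\<Sum>a\<in>UNIV - {ix}. gd a * P a)"
    by (rule sum.remove) auto
  have pp: "partial (\<lambda>q'. Phat g ix W i q' * Phat g ix W j q') ix q = P' i * P j + P i * P' j" for i j
    using partial_PP[OF q] by (simp add: P_def P'_def)
  have "(\<Sum>i\<in>UNIV. \<Sum>j\<in>UNIV. (P' i * P j + P i * P' j) * gg i * gg j)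
      = (\<Sum>i\<in>UNIV. \<Sum>j\<in>UNIV. (P' i * gg i) * (P j * gg j)) + (\<Sum>i\<in>UNIV. \<Sum>j\<in>UNIV. (P i * gg i) * (P' j * gg j))"
    by (simp add: sum.distrib algebra_simps)
  also have "\<dots> = (\<Sum>i\<in>UNIV. P' i * gg i) * (\<Sum>j\<in>UNIV. P j * gg j) + (\<Sum>i\<in>UNIV. P i * gg i) * (\<Sum>j\<in>UNIV. P' j * gg j)"
    by (simp add: sum_product)
  also have "(\<Sum>j\<in>UNIV. P j * gg j) = 1" using sumPg[OF q] by (simp add: P_def gg_def)
  finally have B: "(\<Sum>i\<in>UNIV. \<Sum>j\<in>UNIV. (P' i * P j + P i * P' j) * gg i * gg j) = 2 * (\<Sum>i\<in>UNIV. P' i * gg i)"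
    by simp
  have "Gfun g ix W q = gd ix * P ix + (\<Sum>a\<in>UNIV - {ix}. gd a * P a)
       + (\<Sum>i\<in>UNIV. \<Sum>j\<in>UNIV. (P' i * P j + P i * P' j) * gg i * gg j)"
    unfolding Gfun_def Hc1 pp by (simp add: Hc_eq P_def gd_def gg_def)
  also have "\<dots> = (\<Sum>i\<in>UNIV. gd i * P i) + 2 * (\<Sum>i\<in>UNIV. P' i * gg i)" using A B by simp
  finally show ?thesis by (simp add: P_def P'_def gd_def gg_def)
qed

lemma bracket:
  assumes q: "q \<in> \<Omega>" and K: "c1 \<Omega> K"
  shows "poisson (KP g ix W K) (hamil g) q (c *\<^sub>R s1 q) = c^3 / 2 * (partial K ix q + K q * Gfun g ix W q)"
proof -
  define \<sigma> where "\<sigma> = c *\<^sub>R s1 q"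
  define X where "X i = partial (\<lambda>q'. KP g ix W K q' \<sigma>) i q" for i
  define P where "P i = Phat g ix W i q" for i
  define P' where "P' i = partial (Phat g ix W i) ix q" for i
  define gd where "gd i = partial (\<lambda>p. g p $ ix $ ix) i q" for i
  define gg where "gg i = g q $ i $ ix" for i
  have "poisson (KP g ix W K) (hamil g) q \<sigma>
      = (\<Sum>i\<in>UNIV. X i * (if i = ix then c else 0) - K q * c * P i * (- 1/2 * c^2 * gd i))"
    unfolding poisson_def X_def \<sigma>_def
    by (simp add: partial_hamil_fiber[OF q] partial_KP_fiber[OF q] partial_hamil_base[OF q] P_def gd_def)
  also have "\<dots> = (\<Sum>i\<in>UNIV. (if i = ix then X i * c else 0)) + (\<Sum>i\<in>UNIV. 1/2 * c^3 * K q * (P i * gd i))"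
  proof -
    have "X i * (if i = ix then c else 0) - K q * c * P i * (- 1/2 * c^2 * gd i)
        = (if i = ix then X i * c else 0) + 1/2 * c^3 * K q * (P i * gd i)" for i
      by (cases "i = ix") (simp_all add: power3_eq_cube power2_eq_square algebra_simps)
    then show ?thesis by (simp add: sum.distrib)
  qed
  also have "\<dots> = X ix * c + 1/2 * c^3 * K q * (\<Sum>i\<in>UNIV. P i * gd i)"
    by (simp add: sum_distrib_left)
  also have "X ix = 1/2 * partial K ix q * c^2 + K q * c * (c * (\<Sum>k\<in>UNIV. gg k * P' k))"
  proof -
    have "X ix = 1/2 * partial K ix q * c^2 + K q * c * (\<Sum>k\<in>UNIV. (c *\<^sub>R s1 q) $ k * P' k)"
      unfolding X_def \<sigma>_def P'_def by (rule partial_KP_base[OF q K])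
    also have "(\<Sum>k\<in>UNIV. (c *\<^sub>R s1 q) $ k * P' k) = c * (\<Sum>k\<in>UNIV. gg k * P' k)"
      by (simp add: s1_nth gg_def sum_distrib_left mult.assoc)
    finally show ?thesis .
  qed
  also have "Gfun g ix W q = (\<Sum>i\<in>UNIV. gd i * P i) + 2 * (\<Sum>i\<in>UNIV. P' i * gg i)"
    using Gfun_eq[OF q] by (simp add: gd_def P_def P'_def gg_def)
  moreover have sA: "(\<Sum>i\<in>UNIV. gd i * P i) = (\<Sum>i\<in>UNIV. P i * gd i)" by (simp add: mult.commute)
  moreover have sB: "(\<Sum>i\<in>UNIV. P' i * gg i) = (\<Sum>i\<in>UNIV. gg i * P' i)" by (simp add: mult.commute)
  moreover have alg: "(1/2*kx*c^2 + k*c*(c*b))*c + 1/2*c^3*k*a = c^3/2*(kx + k*(a + 2*b))" for kx k a b :: real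
    by (simp add: power3_eq_cube power2_eq_square algebra_simps)
  ultimately show ?thesis unfolding \<sigma>_def[symmetric] by (simp only: alg)
qed

end

lemma pd_upd0:
  "pd (\<lambda>q. K (upd ix q 0)) is = (if ix \<in> set is then (\<lambda>q. 0) else (\<lambda>q. pd K is (upd ix q 0)))"
proof (induction "is")
  case Nil
  then show ?case by simp
next
  case (Cons i "is")
  show ?case
  proof (cases "ix \<in> set is")
    case True
    then show ?thesis using Cons by (simp add: partial_def fun_eq_iff)
  next
    case False
    then have e: "pd (\<lambda>q. K (upd ix q 0)) is = (\<lambda>q. pd K is (upd ix q 0))" using Cons by simp
    show ?thesis
    proof (cases "i = ix")
      case True
      have "partial (\<lambda>q. pd K is (upd ix q 0)) ix q = 0" for q
        unfolding partial_def by (simp add: upd_line)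
      then show ?thesis using True by (simp add: e fun_eq_iff)
    next
      case False
      have "partial (\<lambda>q. pd K is (upd ix q 0)) i q = partial (pd K is) i (upd ix q 0)" for q
        unfolding partial_def using False by (simp add: upd_other)
      then show ?thesis using False \<open>ix \<notin> set is\<close> by (simp add: e fun_eq_iff)
    qed
  qed
qed

context thm9 begin

lemma continuous_upd0: "continuous_on S (\<lambda>q. upd ix q 0)"
  unfolding upd_def
proof (intro continuous_on_vec_lambda)
  fix k show "continuous_on S (\<lambda>x. if k = ix then 0 else x $ k)"
    by (cases "k = ix") (auto intro!: continuous_intros linear_continuous_on bounded_linear_vec_nth)
qed

lemma smooth_upd0:
  assumes K: "smooth_on \<Omega> K"
  shows "smooth_on \<Omega> (\<lambda>q. K (upd ix q 0))"
  unfolding smooth_on_def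
proof (intro allI conjI ballI)
  fix "is" :: "'n list"
  have ins: "upd ix q 0 \<in> \<Omega>" if "q \<in> \<Omega>" for q using upd_in[OF that] r by simp
  show "continuous_on \<Omega> (pd (\<lambda>q. K (upd ix q 0)) is)"
  proof (cases "ix \<in> set is")
    case True then show ?thesis by (simp add: pd_upd0)
  next
    case False
    have "continuous_on \<Omega> (pd K is)" using K unfolding smooth_on_def by blast
    then have "continuous_on \<Omega> (\<lambda>q. pd K is (upd ix q 0))"
      by (rule continuous_on_compose2[OF _ continuous_upd0]) (use ins in blast)
    then show ?thesis using False by (simp add: pd_upd0)
  qed
  fix i q assume q: "q \<in> \<Omega>"
  show "(\<lambda>t. pd (\<lambda>q. K (upd ix q 0)) is (q + t *\<^sub>R axis i 1)) field_differentiable at 0"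
  proof (cases "ix \<in> set is \<or> i = ix")
    case True
    then show ?thesis by (auto simp: pd_upd0 upd_line)
  next
    case False
    have "(\<lambda>t. pd K is (upd ix q 0 + t *\<^sub>R axis i 1)) field_differentiable at 0"
      using K ins[OF q] unfolding smooth_on_def by blast
    then show ?thesis using False by (simp add: pd_upd0 upd_other)
  qed
qed

lemma kinetic_iff:
  assumes K: "c1 \<Omega> K"
  shows "kinetic_eq \<Omega> g ix W K \<longleftrightarrow> (\<forall>q\<in>\<Omega>. partial K ix q + K q * Gfun g ix W q = 0)"
proof
  assume ke: "kinetic_eq \<Omega> g ix W K"
  show "\<forall>q\<in>\<Omega>. partial K ix q + K q * Gfun g ix W q = 0"
  proof
    fix q assume q: "q \<in> \<Omega>"
    have "s1 q \<in> What g ix q" unfolding What_eq using rangeI[of "\<lambda>c. c *\<^sub>R s1 q" 1] by simp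
    then have "poisson (KP g ix W K) (hamil g) q (1 *\<^sub>R s1 q) = 0" using ke q unfolding kinetic_eq_def by simp
    then show "partial K ix q + K q * Gfun g ix W q = 0" using bracket[OF q K, of 1] by simp
  qed
next
  assume E: "\<forall>q\<in>\<Omega>. partial K ix q + K q * Gfun g ix W q = 0"
  show "kinetic_eq \<Omega> g ix W K" unfolding kinetic_eq_def
  proof (intro ballI)
    fix q \<sigma> assume q: "q \<in> \<Omega>" and s: "\<sigma> \<in> What g ix q"
    then obtain c where "\<sigma> = c *\<^sub>R s1 q" unfolding What_eq by blast
    then show "poisson (KP g ix W K) (hamil g) q \<sigma> = 0" using bracket[OF q K, of c] E q by simp
  qed
qed

lemma Gfun_cont: "continuous_on \<Omega> (Gfun g ix W)"
proof -
  have "continuous_on \<Omega> (\<lambda>q. (\<Sum>i\<in>UNIV. partial (\<lambda>p. g p $ ix $ ix) i q * Phat g ix W i q)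
            + 2 * (\<Sum>i\<in>UNIV. partial (Phat g ix W i) ix q * g q $ i $ ix))"
    by (intro continuous_intros c1_pcont[OF g_c1] c1_cont[OF Phat_c1] c1_pcont[OF Phat_c1] c1_cont[OF g_c1])
  moreover have "continuous_on \<Omega> (Gfun g ix W) = continuous_on \<Omega> (\<lambda>q. (\<Sum>i\<in>UNIV. partial (\<lambda>p. g p $ ix $ ix) i q * Phat g ix W i q)
            + 2 * (\<Sum>i\<in>UNIV. partial (Phat g ix W i) ix q * g q $ i $ ix))"
    by (rule continuous_on_cong) (simp_all add: Gfun_eq)
  ultimately show ?thesis by simp
qed

lemma line_cont:
  assumes "continuous_on \<Omega> f" "q \<in> \<Omega>"
  shows "continuous_on {-r<..<r} (\<lambda>\<tau>. f (upd ix q \<tau>))"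
  by (rule continuous_on_compose2[OF assms(1) continuous_upd]) (use upd_in[OF assms(2)] in blast)

definition Gam where "Gam q t = oint 0 t (\<lambda>\<tau>. Gfun g ix W (upd ix q \<tau>))"

lemma Gam_DERIV:
  assumes q: "q \<in> \<Omega>" and t: "t \<in> {-r<..<r}"
  shows "((\<lambda>s. Gam q s) has_real_derivative Gfun g ix W (upd ix q t)) (at t)"
  unfolding Gam_def using r(1) by (intro oint_DERIV[OF line_cont[OF Gfun_cont q] _ _ t]) auto

lemma Gam_line: "Gam (q + s *\<^sub>R axis ix 1) = Gam q"
  by (simp add: Gam_def upd_line fun_eq_iff)

end

context thm9 begin

lemma part1:
  assumes Ks: "smooth_on \<Omega> K" and Kp: "\<forall>q\<in>\<Omega>. K q > 0"
  shows "kinetic_eq \<Omega> g ix W K \<longleftrightarrow>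
          (\<exists>\<xi>. smooth_on \<Omega> \<xi> \<and> (\<forall>q\<in>\<Omega>. \<xi> q > 0 \<and> \<xi> q = \<xi> (upd ix q 0)) \<and>
               (\<forall>q\<in>\<Omega>. K q = \<xi> q * exp (- oint 0 (q $ ix) (\<lambda>t. Gfun g ix W (upd ix q t)))))"
proof -
  have K: "c1 \<Omega> K" by (rule smooth_c1[OF Ks])
  have ins: "upd ix q 0 \<in> \<Omega>" if "q \<in> \<Omega>" for q using upd_in[OF that] r by simp
  show ?thesis
  proof
    assume ke: "kinetic_eq \<Omega> g ix W K"
    then have E: "\<forall>q\<in>\<Omega>. partial K ix q + K q * Gfun g ix W q = 0" using kinetic_iff[OF K] by blast
    define \<xi> where "\<xi> q = K (upd ix q 0)" for q
    have "K q = \<xi> q * exp (- Gam q (q $ ix))" if q: "q \<in> \<Omega>" for q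
    proof -
      define \<phi> where "\<phi> t = ln (K (upd ix q t)) + Gam q t" for t
      have d0: "(\<phi> has_real_derivative 0) (at t within {-r<..<r})" if t: "t \<in> {-r<..<r}" for t
      proof -
        have p: "upd ix q t \<in> \<Omega>" by (rule upd_in[OF q t])
        have Kpos: "K (upd ix q t) > 0" using Kp p by blast
        have dK: "((\<lambda>\<tau>. K (upd ix q \<tau>)) has_real_derivative partial K ix (upd ix q t)) (at t)"
          by (rule line_DERIV[OF K p])
        have dl: "((\<lambda>\<tau>. ln (K (upd ix q \<tau>))) has_real_derivative (1 / K (upd ix q t)) * partial K ix (upd ix q t)) (at t)"
          by (rule DERIV_chain2[OF DERIV_ln_divide[OF Kpos] dK])
        have "(\<phi> has_real_derivative (1 / K (upd ix q t)) * partial K ix (upd ix q t) + Gfun g ix W (upd ix q t)) (at t)"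
          unfolding \<phi>_def by (rule DERIV_add[OF dl Gam_DERIV[OF q t]])
        moreover have "(1 / K (upd ix q t)) * partial K ix (upd ix q t) + Gfun g ix W (upd ix q t) = 0"
          using E p Kpos by (simp add: field_simps)
        ultimately show ?thesis by (simp add: has_field_derivative_at_within)
      qed
      obtain c where c: "\<forall>x\<in>{-r<..<r}. \<phi> x = c"
        using has_field_derivative_zero_constant[of "{-r<..<r}" \<phi>] d0 by auto
      have "\<phi> (q $ ix) = \<phi> 0" using c ix_range[OF q] r(1) by simp
      then have "ln (K q) + Gam q (q $ ix) = ln (\<xi> q)"
        by (simp add: \<phi>_def upd_self \<xi>_def Gam_def)
      then have "ln (K q) = ln (\<xi> q) - Gam q (q $ ix)" by simp
      then have "exp (ln (K q)) = exp (ln (\<xi> q) - Gam q (q $ ix))" by simp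
      moreover have "\<xi> q > 0" using Kp ins[OF q] by (simp add: \<xi>_def)
      ultimately show ?thesis using Kp q by (simp add: exp_diff exp_minus field_simps)
    qed
    moreover have "smooth_on \<Omega> \<xi>" unfolding \<xi>_def by (rule smooth_upd0[OF Ks])
    moreover have "\<forall>q\<in>\<Omega>. \<xi> q > 0 \<and> \<xi> q = \<xi> (upd ix q 0)"
      using Kp ins by (simp add: \<xi>_def upd_upd)
    ultimately show "\<exists>\<xi>. smooth_on \<Omega> \<xi> \<and> (\<forall>q\<in>\<Omega>. \<xi> q > 0 \<and> \<xi> q = \<xi> (upd ix q 0)) \<and>
               (\<forall>q\<in>\<Omega>. K q = \<xi> q * exp (- oint 0 (q $ ix) (\<lambda>t. Gfun g ix W (upd ix q t))))"
      unfolding Gam_def by blast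
  next
    assume "\<exists>\<xi>. smooth_on \<Omega> \<xi> \<and> (\<forall>q\<in>\<Omega>. \<xi> q > 0 \<and> \<xi> q = \<xi> (upd ix q 0)) \<and>
               (\<forall>q\<in>\<Omega>. K q = \<xi> q * exp (- oint 0 (q $ ix) (\<lambda>t. Gfun g ix W (upd ix q t))))"
    then obtain \<xi> where xi: "\<forall>q\<in>\<Omega>. \<xi> q = \<xi> (upd ix q 0)"
        and KE: "\<forall>q\<in>\<Omega>. K q = \<xi> q * exp (- Gam q (q $ ix))"
      unfolding Gam_def by blast
    have "\<forall>q\<in>\<Omega>. partial K ix q + K q * Gfun g ix W q = 0"
    proof
      fix q assume q: "q \<in> \<Omega>"
      define C where "C = \<xi> (upd ix q 0)"
      have ev: "eventually (\<lambda>t. K (q + t *\<^sub>R axis ix 1) = C * exp (- Gam q (q $ ix + t))) (nhds 0)"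
      proof (rule eventually_mono[OF ev_line[OF open_\<Omega> q, of "axis ix 1"]])
        fix t assume t: "q + t *\<^sub>R axis ix 1 \<in> \<Omega>"
        have "K (q + t *\<^sub>R axis ix 1) = \<xi> (q + t *\<^sub>R axis ix 1) * exp (- Gam (q + t *\<^sub>R axis ix 1) ((q + t *\<^sub>R axis ix 1) $ ix))"
          using KE t by blast
        also have "\<xi> (q + t *\<^sub>R axis ix 1) = C" using xi t by (simp add: C_def upd_line)
        finally show "K (q + t *\<^sub>R axis ix 1) = C * exp (- Gam q (q $ ix + t))"
          by (simp add: Gam_line)
      qed
      have dG: "((\<lambda>t. Gam q (t + q $ ix)) has_real_derivative Gfun g ix W (upd ix q (q $ ix))) (at 0)"
        using Gam_DERIV[OF q ix_range[OF q]] DERIV_shift[of "Gam q" _ 0 "q $ ix"] by simp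
      have "((\<lambda>t. C * exp (- Gam q (q $ ix + t))) has_real_derivative C * (exp (- Gam q (q $ ix + 0)) * (- Gfun g ix W q))) (at 0)"
        using DERIV_cmult[OF DERIV_chain2[OF DERIV_exp DERIV_minus[OF dG]], of C] by (simp add: upd_self add.commute)
      then have "((\<lambda>t. K (q + t *\<^sub>R axis ix 1)) has_real_derivative - (K q * Gfun g ix W q)) (at 0)"
        using KE q by (subst DERIV_cong_ev[OF refl ev refl]) (simp add: C_def xi[rule_format, OF q, symmetric] mult.assoc)
      then have "partial K ix q = - (K q * Gfun g ix W q)" by (rule partial_DERIV)
      then show "partial K ix q + K q * Gfun g ix W q = 0" by simp
    qed
    then show "kinetic_eq \<Omega> g ix W K" using kinetic_iff[OF K] by blast
  qed
qed

end

context thm9 begin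

lemma ufun_eq: "ufun g ix W h K q = (\<Sum>i\<in>UNIV. partial h i q * Phat g ix W i q) * K q"
proof -
  have "(\<Sum>i\<in>UNIV. partial h i q * Phat g ix W i q) = partial h ix q * Phat g ix W ix q + (\<Sum>a\<in>UNIV - {ix}. partial h a q * Phat g ix W a q)"
    by (rule sum.remove) auto
  then show ?thesis by (simp add: ufun_def)
qed

lemma ufun_c1:
  assumes K: "c1 \<Omega> K"
  shows "c1 \<Omega> (ufun g ix W h K)"
proof -
  have e: "ufun g ix W h K = (\<lambda>q. (\<Sum>i\<in>UNIV. partial h i q * Phat g ix W i q) * K q)"
    by (simp add: fun_eq_iff ufun_eq)
  show ?thesis unfolding e
    by (intro c1_mult c1_sum K smooth_c1_partial[OF h_smooth] Phat_c1) auto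
qed

lemma dcomp_FH: "q \<in> \<Omega> \<Longrightarrow> dcomp f (FH g) q (c *\<^sub>R s1 q) = c * partial f ix q"
proof -
  assume q: "q \<in> \<Omega>"
  have "dcomp f (FH g) q (c *\<^sub>R s1 q) = (\<Sum>i\<in>UNIV. if i = ix then c * partial f ix q else 0)"
    unfolding dcomp_def FH_s1[OF q] by (rule sum.cong) (auto simp: axis_def)
  then show ?thesis by simp
qed

lemma dcomp_KP: "q \<in> \<Omega> \<Longrightarrow> dcomp h (fib_deriv (KP g ix W K)) q (c *\<^sub>R s1 q) = c * ufun g ix W h K q"
proof -
  assume q: "q \<in> \<Omega>"
  have "dcomp h (fib_deriv (KP g ix W K)) q (c *\<^sub>R s1 q) = (\<Sum>i\<in>UNIV. c * (partial h i q * Phat g ix W i q * K q))"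
    unfolding dcomp_def fib_deriv_def by (rule sum.cong) (simp_all add: partial_KP_fiber[OF q])
  also have "\<dots> = c * ufun g ix W h K q" by (simp add: ufun_eq sum_distrib_left sum_distrib_right mult.assoc)
  finally show ?thesis .
qed

lemma pot_iff:
  "potential_eq \<Omega> g ix W h K f \<longleftrightarrow> (\<forall>q\<in>\<Omega>. partial f ix q = ufun g ix W h K q)"
proof
  assume pe: "potential_eq \<Omega> g ix W h K f"
  show "\<forall>q\<in>\<Omega>. partial f ix q = ufun g ix W h K q"
  proof
    fix q assume q: "q \<in> \<Omega>"
    have "1 *\<^sub>R s1 q \<in> What g ix q" unfolding What_eq by (rule rangeI)
    then have "dcomp f (FH g) q (1 *\<^sub>R s1 q) - dcomp h (fib_deriv (KP g ix W K)) q (1 *\<^sub>R s1 q) = 0"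
      using pe q unfolding potential_eq_def by blast
    then show "partial f ix q = ufun g ix W h K q"
      using dcomp_FH[OF q, of f 1] dcomp_KP[OF q, of K 1] by simp
  qed
next
  assume E: "\<forall>q\<in>\<Omega>. partial f ix q = ufun g ix W h K q"
  show "potential_eq \<Omega> g ix W h K f" unfolding potential_eq_def
  proof (intro ballI)
    fix q \<sigma> assume q: "q \<in> \<Omega>" and s: "\<sigma> \<in> What g ix q"
    then obtain c where "\<sigma> = c *\<^sub>R s1 q" unfolding What_eq by blast
    then show "dcomp f (FH g) q \<sigma> - dcomp h (fib_deriv (KP g ix W K)) q \<sigma> = 0"
      using E q by (simp add: dcomp_FH[OF q] dcomp_KP[OF q])
  qed
qed

lemma hhat_line: "hhat g ix W h K vpi (q + t *\<^sub>R axis ix 1)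
   = oint 0 (q $ ix + t) (\<lambda>\<tau>. ufun g ix W h K (upd ix q \<tau>)) + vpi / 2 * (\<Sum>a\<in>UNIV - {ix}. (q $ a)^2)"
proof -
  have "(\<Sum>a\<in>UNIV - {ix}. ((q + t *\<^sub>R axis ix 1) $ a)^2) = (\<Sum>a\<in>UNIV - {ix}. (q $ a)^2)"
    by (rule sum.cong) (auto simp: axis_def)
  then show ?thesis by (simp add: hhat_def upd_line)
qed

lemma hhat_partial_ix:
  assumes q: "q \<in> \<Omega>" and K: "c1 \<Omega> K"
  shows "partial (hhat g ix W h K vpi) ix q = ufun g ix W h K q"
proof -
  define u where "u = ufun g ix W h K"
  have uc: "continuous_on {-r<..<r} (\<lambda>\<tau>. u (upd ix q \<tau>))"
    unfolding u_def by (rule line_cont[OF c1_cont[OF ufun_c1[OF K]] q])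
  have d: "((\<lambda>t. oint 0 t (\<lambda>\<tau>. u (upd ix q \<tau>))) has_real_derivative u (upd ix q (q $ ix))) (at (0 + q $ ix))"
    using oint_DERIV[OF uc _ _ ix_range[OF q]] r(1) by simp
  have "((\<lambda>t. oint 0 (t + q $ ix) (\<lambda>\<tau>. u (upd ix q \<tau>))) has_real_derivative u q) (at 0)"
    using d DERIV_shift[of "\<lambda>t. oint 0 t (\<lambda>\<tau>. u (upd ix q \<tau>))" _ 0 "q $ ix"] by (simp add: upd_self)
  then have "((\<lambda>t. oint 0 (q $ ix + t) (\<lambda>\<tau>. u (upd ix q \<tau>))) has_real_derivative u q) (at 0)"
    by (simp add: add.commute)
  then have "((\<lambda>t. oint 0 (q $ ix + t) (\<lambda>\<tau>. u (upd ix q \<tau>)) + vpi / 2 * (\<Sum>a\<in>UNIV - {ix}. (q $ a)^2)) has_real_derivative u q + 0) (at 0)"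
    by (rule DERIV_add) simp
  then have "((\<lambda>t. hhat g ix W h K vpi (q + t *\<^sub>R axis ix 1)) has_real_derivative u q) (at 0)"
    unfolding hhat_line u_def by simp
  then show ?thesis unfolding u_def by (rule partial_DERIV)
qed

lemma part2:
  assumes K: "c1 \<Omega> K"
  shows "potential_eq \<Omega> g ix W h K (hhat g ix W h K vpi)"
  unfolding pot_iff using hhat_partial_ix[OF _ K] by blast

end

context thm9 begin

lemma partial_h_zero:
  assumes hd: "(h has_derivative (\<lambda>v. 0)) (at 0)"
  shows "partial h i 0 = 0"
proof -
  have "((\<lambda>t::real. t *\<^sub>R axis i (1::real)) has_derivative (\<lambda>t. t *\<^sub>R axis i 1)) (at 0)"
    by (intro derivative_eq_intros) auto
  from has_derivative_compose[OF this, of h "\<lambda>v. 0"] hd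
  have "((\<lambda>t. h (t *\<^sub>R axis i 1)) has_derivative (\<lambda>x. 0)) (at 0)" by simp
  moreover have "((*) (0::real)) = (\<lambda>x. 0)" by auto
  ultimately have "((\<lambda>t. h (0 + t *\<^sub>R axis i 1)) has_real_derivative 0) (at 0)"
    by (simp add: has_field_derivative_def)
  then show ?thesis by (rule partial_DERIV)
qed

lemma u_zero:
  assumes hd: "(h has_derivative (\<lambda>v. 0)) (at 0)"
  shows "ufun g ix W h K 0 = 0"
  by (simp add: ufun_eq partial_h_zero[OF hd])

lemma hhat_zero: "hhat g ix W h K vpi 0 = 0"
  by (simp add: hhat_def)

lemma norm_upd_le: "\<bar>\<tau>\<bar> \<le> \<bar>y $ ix\<bar> \<Longrightarrow> norm (upd ix y \<tau>) \<le> norm y"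
  by (rule norm_le_componentwise_cart) (auto simp: upd_def)

lemma sum_sq_le: "(\<Sum>a\<in>UNIV - {ix}. (y $ a)^2) \<le> (norm y)^2"
proof -
  have "(\<Sum>a\<in>UNIV - {ix}. (y $ a)^2) \<le> (\<Sum>a\<in>UNIV. (y $ a)^2)"
    by (rule sum_mono2) auto
  also have "\<dots> = (norm y)^2" using power2_norm_eq_inner[of y] by (simp add: inner_vec_def power2_eq_square)
  finally show ?thesis .
qed

lemma hhat_deriv0:
  assumes K: "c1 \<Omega> K" and hd: "(h has_derivative (\<lambda>v. 0)) (at 0)"
  shows "(hhat g ix W h K vpi has_derivative (\<lambda>v. 0)) (at 0)"
  unfolding has_derivative_at_alt
proof (intro conjI allI impI)
  show "bounded_linear (\<lambda>v::real^'n. 0::real)" by simp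
  fix e :: real assume e: "e > 0"
  define u where "u = ufun g ix W h K"
  have u0: "u 0 = 0" unfolding u_def by (rule u_zero[OF hd])
  have uc: "continuous_on \<Omega> u" unfolding u_def by (rule c1_cont[OF ufun_c1[OF K]])
  have "isCont u 0" using uc open_\<Omega> zero_\<Omega> continuous_on_eq_continuous_at by blast
  then obtain d1 where d1: "d1 > 0" "\<forall>x. x \<noteq> 0 \<and> norm (x - 0) < d1 \<longrightarrow> norm (u x - u 0) < e/2"
  proof -
    have "e/2 > 0" using e by simp
    then show ?thesis using that \<open>isCont u 0\<close> unfolding isCont_def LIM_eq by blast
  qed
  have d1': "\<bar>u x\<bar> \<le> e/2" if "norm x < d1" for x
    using d1(2)[rule_format, of x] that u0 e by (cases "x = 0") auto
  obtain d2 where d2: "d2 > 0" "ball 0 d2 \<subseteq> \<Omega>" using open_\<Omega> zero_\<Omega> open_contains_ball by blast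
  define d where "d = min (min d1 d2) (e / (\<bar>vpi\<bar> + 1))"
  have dpos: "d > 0" using d1 d2 e by (simp add: d_def)
  show "\<exists>d>0. \<forall>y. norm (y - 0) < d \<longrightarrow> norm (hhat g ix W h K vpi y - hhat g ix W h K vpi 0 - 0) \<le> e * norm (y - 0)"
  proof (intro exI[of _ d] conjI allI impI dpos)
    fix y :: "real^'n" assume y: "norm (y - 0) < d"
    then have yd: "norm y < d" by simp
    have seg: "norm (upd ix y \<tau>) < d" if "\<tau> \<in> closed_segment 0 (y $ ix)" for \<tau>
    proof -
      have "\<bar>\<tau>\<bar> \<le> \<bar>y $ ix\<bar>"
      proof (cases "0 \<le> y $ ix")
        case True then show ?thesis using that by (simp add: closed_segment_eq_real_ivl)
      next
        case False then show ?thesis using that by (simp add: closed_segment_eq_real_ivl)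
      qed
      then show ?thesis using norm_upd_le yd by (meson le_less_trans)
    qed
    have inO: "upd ix y \<tau> \<in> \<Omega>" if "\<tau> \<in> closed_segment 0 (y $ ix)" for \<tau>
      using seg[OF that] d2(2) by (auto simp: d_def)
    have cseg: "continuous_on (closed_segment 0 (y $ ix)) (\<lambda>\<tau>. u (upd ix y \<tau>))"
      by (rule continuous_on_compose2[OF uc continuous_upd]) (use inO in blast)
    have I: "\<bar>oint 0 (y $ ix) (\<lambda>\<tau>. u (upd ix y \<tau>))\<bar> \<le> e/2 * \<bar>y $ ix\<bar>"
    proof (rule oint_bound[OF cseg])
      fix s assume "s \<in> closed_segment 0 (y $ ix)"
      then have "norm (upd ix y s) < d1" using seg[of s] by (simp add: d_def)
      then show "\<bar>u (upd ix y s)\<bar> \<le> e/2" by (rule d1')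
    qed
    also have "\<dots> \<le> e/2 * norm y" using e component_le_norm_cart[of y ix] by simp
    finally have I': "\<bar>oint 0 (y $ ix) (\<lambda>\<tau>. u (upd ix y \<tau>))\<bar> \<le> e/2 * norm y" .
    have Q: "\<bar>vpi / 2 * (\<Sum>a\<in>UNIV - {ix}. (y $ a)^2)\<bar> \<le> e/2 * norm y"
    proof -
      have s0: "0 \<le> (\<Sum>a\<in>UNIV - {ix}. (y $ a)^2)" by (simp add: sum_nonneg)
      have "\<bar>vpi / 2 * (\<Sum>a\<in>UNIV - {ix}. (y $ a)^2)\<bar> = \<bar>vpi\<bar> / 2 * (\<Sum>a\<in>UNIV - {ix}. (y $ a)^2)"
        using s0 by (simp add: abs_mult)
      also have "\<dots> \<le> \<bar>vpi\<bar> / 2 * (norm y)^2" by (intro mult_left_mono sum_sq_le) auto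
      also have "\<dots> = (\<bar>vpi\<bar> * norm y) / 2 * norm y" by (simp add: power2_eq_square)
      also have "\<dots> \<le> e / 2 * norm y"
      proof (intro mult_right_mono divide_right_mono)
        have "norm y \<le> e / (\<bar>vpi\<bar> + 1)" using yd by (simp add: d_def)
        then have "(\<bar>vpi\<bar> + 1) * norm y \<le> e" by (simp add: field_simps)
        moreover have "(\<bar>vpi\<bar> + 1) * norm y = \<bar>vpi\<bar> * norm y + norm y" by (simp add: algebra_simps)
        ultimately show "\<bar>vpi\<bar> * norm y \<le> e" using norm_ge_zero[of y] by linarith
      qed auto
      finally show ?thesis .
    qed
    have "hhat g ix W h K vpi y = oint 0 (y $ ix) (\<lambda>\<tau>. u (upd ix y \<tau>)) + vpi / 2 * (\<Sum>a\<in>UNIV - {ix}. (y $ a)^2)"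
      by (simp add: hhat_def u_def)
    then show "norm (hhat g ix W h K vpi y - hhat g ix W h K vpi 0 - 0) \<le> e * norm (y - 0)"
      using I' Q by (simp add: hhat_zero)
  qed
qed

end

lemma line_DERIV2:
  assumes "c1 S f" "p0 + s *\<^sub>R axis a 1 \<in> S"
  shows "((\<lambda>s'. f (p0 + s' *\<^sub>R axis a 1)) has_real_derivative partial f a (p0 + s *\<^sub>R axis a 1)) (at s)"
proof -
  have "((\<lambda>x. f ((p0 + s *\<^sub>R axis a 1) + x *\<^sub>R axis a 1)) has_real_derivative partial f a (p0 + s *\<^sub>R axis a 1)) (at 0)"
    using c1_deriv[OF assms] .
  moreover have "\<And>x. (p0 + s *\<^sub>R axis a 1) + x *\<^sub>R axis a 1 = p0 + (x + s) *\<^sub>R axis a 1"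
    by (simp add: algebra_simps scaleR_add_left)
  ultimately have "((\<lambda>x. f (p0 + (x + s) *\<^sub>R axis a 1)) has_real_derivative partial f a (p0 + s *\<^sub>R axis a 1)) (at 0)"
    by simp
  then show ?thesis using DERIV_shift[of "\<lambda>s'. f (p0 + s' *\<^sub>R axis a 1)" _ 0 s] by simp
qed

lemma leib:
  fixes F Fs :: "real \<Rightarrow> real \<Rightarrow> real"
  assumes U: "open U" "0 \<in> U" "convex U"
    and d: "\<And>s \<tau>. s \<in> U \<Longrightarrow> \<tau> \<in> closed_segment 0 t \<Longrightarrow> ((\<lambda>s. F s \<tau>) has_real_derivative Fs s \<tau>) (at s)"
    and cF: "\<And>s. s \<in> U \<Longrightarrow> continuous_on (closed_segment 0 t) (F s)"
    and cFs: "continuous_on (U \<times> closed_segment 0 t) (\<lambda>(s, \<tau>). Fs s \<tau>)"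
  shows "((\<lambda>s. oint 0 t (F s)) has_real_derivative oint 0 t (Fs 0)) (at 0)"
proof (cases "0 \<le> t")
  case True
  then have cs: "closed_segment 0 t = cbox 0 t" by (simp add: closed_segment_eq_real_ivl)
  have "((\<lambda>s. integral (cbox 0 t) (F s)) has_field_derivative integral (cbox 0 t) (Fs 0)) (at 0 within U)"
  proof (rule leibniz_rule_field_derivative[OF _ _ _ U(2,3)])
    fix s \<tau> assume "s \<in> U" "\<tau> \<in> cbox 0 t"
    then show "((\<lambda>s. F s \<tau>) has_field_derivative Fs s \<tau>) (at s within U)"
      using d cs by (auto intro: has_field_derivative_at_within)
  next
    fix s assume "s \<in> U" then show "F s integrable_on cbox 0 t"
      using cF cs by (metis integrable_continuous)
  next
    show "continuous_on (U \<times> cbox 0 t) (\<lambda>(s, \<tau>). Fs s \<tau>)" using cFs cs by simp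
  qed
  then have "((\<lambda>s. integral {0..t} (F s)) has_field_derivative integral {0..t} (Fs 0)) (at 0)"
    using at_within_open[OF U(2,1)] by simp
  then show ?thesis using True by (simp add: oint_def)
next
  case False
  then have cs: "closed_segment 0 t = cbox t 0" by (simp add: closed_segment_eq_real_ivl closed_segment_commute)
  have "((\<lambda>s. integral (cbox t 0) (F s)) has_field_derivative integral (cbox t 0) (Fs 0)) (at 0 within U)"
  proof (rule leibniz_rule_field_derivative[OF _ _ _ U(2,3)])
    fix s \<tau> assume "s \<in> U" "\<tau> \<in> cbox t 0"
    then show "((\<lambda>s. F s \<tau>) has_field_derivative Fs s \<tau>) (at s within U)"
      using d cs by (auto intro: has_field_derivative_at_within)
  next
    fix s assume "s \<in> U" then show "F s integrable_on cbox t 0"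
      using cF cs by (metis integrable_continuous)
  next
    show "continuous_on (U \<times> cbox t 0) (\<lambda>(s, \<tau>). Fs s \<tau>)" using cFs cs by simp
  qed
  then have "((\<lambda>s. integral {t..0} (F s)) has_field_derivative integral {t..0} (Fs 0)) (at 0)"
    using at_within_open[OF U(2,1)] by simp
  then have "((\<lambda>s. - integral {t..0} (F s)) has_field_derivative - integral {t..0} (Fs 0)) (at 0)"
    by (rule DERIV_minus)
  then show ?thesis using False by (simp add: oint_def)
qed

context thm9 begin

lemma hess_xx_ax:
  assumes K: "c1 \<Omega> K"
  shows "partial (partial (hhat g ix W h K vpi) ix) j 0 = partial (ufun g ix W h K) j 0"
  by (rule partial_cong_open[OF open_\<Omega> zero_\<Omega>]) (rule hhat_partial_ix[OF _ K])

lemma hhat_ab: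
  assumes a: "a \<noteq> ix" and b: "b \<noteq> ix"
  shows "hhat g ix W h K vpi (s *\<^sub>R axis a 1 + t *\<^sub>R axis b 1) = vpi / 2 * (if a = b then (s + t)^2 else s^2 + t^2)"
proof -
  have ix0: "(s *\<^sub>R axis a 1 + t *\<^sub>R axis b 1) $ ix = 0" using a b by (simp add: axis_def)
  have [simp]: "axis a (1::real) $ ix = 0" "axis b (1::real) $ ix = 0" using a b by (simp_all add: axis_def)
  have "(\<Sum>c\<in>UNIV - {ix}. ((s *\<^sub>R axis a 1 + t *\<^sub>R axis b 1) $ c)^2) = (if a = b then (s + t)^2 else s^2 + t^2)"
  proof (cases "a = b")
    case True
    have "(\<Sum>c\<in>UNIV - {ix}. ((s *\<^sub>R axis a 1 + t *\<^sub>R axis b 1) $ c)^2) = (\<Sum>c\<in>UNIV - {ix}. if c = a then (s + t)^2 else 0)"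
      by (rule sum.cong) (auto simp: axis_def True)
    also have "\<dots> = (s + t)^2" using a by simp
    finally show ?thesis using True by simp
  next
    case False
    have "(\<Sum>c\<in>UNIV - {ix}. ((s *\<^sub>R axis a 1 + t *\<^sub>R axis b 1) $ c)^2) = (\<Sum>c\<in>UNIV - {ix}. (if c = a then s^2 else 0) + (if c = b then t^2 else 0))"
      by (rule sum.cong) (auto simp: axis_def False)
    also have "\<dots> = s^2 + t^2" using a b by (simp add: sum.distrib)
    finally show ?thesis using False by simp
  qed
  then show ?thesis by (simp add: hhat_def ix0)
qed

lemma hess_ab:
  assumes a: "a \<noteq> ix" and b: "b \<noteq> ix"
  shows "partial (partial (hhat g ix W h K vpi) b) a 0 = (if a = b then vpi else 0)"
proof -
  have pb: "partial (hhat g ix W h K vpi) b (s *\<^sub>R axis a 1) = (if a = b then vpi * s else 0)" for s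
  proof -
    have "((\<lambda>t. vpi / 2 * (if a = b then (s + t)^2 else s^2 + t^2)) has_real_derivative (if a = b then vpi * s else 0)) (at 0)"
      by (cases "a = b") (auto intro!: derivative_eq_intros)
    then show ?thesis by (intro partial_DERIV) (simp add: hhat_ab[OF a b])
  qed
  have "((\<lambda>s. partial (hhat g ix W h K vpi) b (0 + s *\<^sub>R axis a 1)) has_real_derivative (if a = b then vpi else 0)) (at 0)"
    by (simp add: pb)
  then show ?thesis by (rule partial_DERIV)
qed

lemma hhat_ix_a:
  assumes a: "a \<noteq> ix"
  shows "hhat g ix W h K vpi (t *\<^sub>R axis ix 1 + s *\<^sub>R axis a 1)
     = oint 0 t (\<lambda>\<tau>. ufun g ix W h K (\<tau> *\<^sub>R axis ix 1 + s *\<^sub>R axis a 1)) + vpi / 2 * s^2"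
proof -
  have ix0: "(t *\<^sub>R axis ix 1 + s *\<^sub>R axis a 1) $ ix = t" using a by (simp add: axis_def)
  have [simp]: "axis a (1::real) $ ix = 0" using a by (simp add: axis_def)
  have up: "upd ix (t *\<^sub>R axis ix 1 + s *\<^sub>R axis a 1) \<tau> = \<tau> *\<^sub>R axis ix 1 + s *\<^sub>R axis a 1" for \<tau>
    using a by (auto simp: vec_eq_iff upd_def axis_def)
  have "(\<Sum>c\<in>UNIV - {ix}. ((t *\<^sub>R axis ix 1 + s *\<^sub>R axis a 1) $ c)^2) = (\<Sum>c\<in>UNIV - {ix}. if c = a then s^2 else 0)"
    by (rule sum.cong) (auto simp: axis_def)
  also have "\<dots> = s^2" using a by simp
  finally show ?thesis by (simp add: hhat_def ix0 up)
qed

lemma hess_ix_a: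
  assumes K: "c1 \<Omega> K" and a: "a \<noteq> ix"
  shows "partial (partial (hhat g ix W h K vpi) a) ix 0 = partial (ufun g ix W h K) a 0"
proof -
  define u where "u = ufun g ix W h K"
  have uc1: "c1 \<Omega> u" unfolding u_def by (rule ufun_c1[OF K])
  obtain \<rho>0 where r0: "\<rho>0 > 0" "ball 0 \<rho>0 \<subseteq> \<Omega>" using open_\<Omega> zero_\<Omega> open_contains_ball by blast
  define \<rho> where "\<rho> = \<rho>0 / 2"
  have rp: "\<rho> > 0" using r0 by (simp add: \<rho>_def)
  have inO: "\<tau> *\<^sub>R axis ix 1 + s *\<^sub>R axis a 1 \<in> \<Omega>" if "\<bar>\<tau>\<bar> < \<rho>" "\<bar>s\<bar> < \<rho>" for \<tau> s
  proof -
    have "norm (\<tau> *\<^sub>R axis ix (1::real) + s *\<^sub>R axis a (1::real)) \<le> norm (\<tau> *\<^sub>R axis ix (1::real)) + norm (s *\<^sub>R axis a (1::real))"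
      by (rule norm_triangle_ineq)
    also have "\<dots> = \<bar>\<tau>\<bar> + \<bar>s\<bar>" by simp
    finally have "norm (\<tau> *\<^sub>R axis ix (1::real) + s *\<^sub>R axis a (1::real)) < \<rho>0" using that by (simp add: \<rho>_def)
    then show ?thesis using r0(2) by auto
  qed
  define U where "U = {-\<rho><..<\<rho>}"
  have pa: "partial (hhat g ix W h K vpi) a (0 + t *\<^sub>R axis ix 1) = oint 0 t (\<lambda>\<tau>. partial u a (\<tau> *\<^sub>R axis ix 1))"
    if t: "\<bar>t\<bar> < \<rho>" for t
  proof -
    have seg: "\<bar>\<tau>\<bar> < \<rho>" if "\<tau> \<in> closed_segment 0 t" for \<tau>
    proof -
      have "\<bar>\<tau>\<bar> \<le> \<bar>t\<bar>"
      proof (cases "0 \<le> t")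
        case True then show ?thesis using that by (simp add: closed_segment_eq_real_ivl)
      next
        case False then show ?thesis using that by (simp add: closed_segment_eq_real_ivl)
      qed
      then show ?thesis using t by simp
    qed
    have L: "((\<lambda>s. oint 0 t (\<lambda>\<tau>. u (\<tau> *\<^sub>R axis ix 1 + s *\<^sub>R axis a 1))) has_real_derivative
              oint 0 t (\<lambda>\<tau>. partial u a (\<tau> *\<^sub>R axis ix 1 + 0 *\<^sub>R axis a 1))) (at 0)"
    proof (rule leib[where U=U and Fs="\<lambda>s \<tau>. partial u a (\<tau> *\<^sub>R axis ix 1 + s *\<^sub>R axis a 1)"])
      show "open U" "0 \<in> U" "convex U" using rp by (auto simp: U_def)
      fix s \<tau> assume s: "s \<in> U" and tau: "\<tau> \<in> closed_segment 0 t"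
      have "\<tau> *\<^sub>R axis ix 1 + s *\<^sub>R axis a 1 \<in> \<Omega>" using s seg[OF tau] inO by (auto simp: U_def)
      then show "((\<lambda>s. u (\<tau> *\<^sub>R axis ix 1 + s *\<^sub>R axis a 1)) has_real_derivative partial u a (\<tau> *\<^sub>R axis ix 1 + s *\<^sub>R axis a 1)) (at s)"
        by (rule line_DERIV2[OF uc1])
    next
      fix s assume s: "s \<in> U"
      show "continuous_on (closed_segment 0 t) (\<lambda>\<tau>. u (\<tau> *\<^sub>R axis ix 1 + s *\<^sub>R axis a 1))"
        by (rule continuous_on_compose2[OF c1_cont[OF uc1]]) (use s seg inO in \<open>auto intro!: continuous_intros simp: U_def\<close>)
    next
      have "continuous_on (U \<times> closed_segment 0 t) (\<lambda>x. partial u a (snd x *\<^sub>R axis ix 1 + fst x *\<^sub>R axis a 1))"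
        by (rule continuous_on_compose2[OF c1_pcont[OF uc1]]) (use seg inO in \<open>auto intro!: continuous_intros simp: U_def\<close>)
      then show "continuous_on (U \<times> closed_segment 0 t) (\<lambda>(s, \<tau>). partial u a (\<tau> *\<^sub>R axis ix 1 + s *\<^sub>R axis a 1))"
        by (simp add: split_beta)
    qed
    have "((\<lambda>s. hhat g ix W h K vpi (t *\<^sub>R axis ix 1 + s *\<^sub>R axis a 1)) has_real_derivative
             oint 0 t (\<lambda>\<tau>. partial u a (\<tau> *\<^sub>R axis ix 1)) + 0) (at 0)"
      unfolding hhat_ix_a[OF a] u_def[symmetric]
      by (rule DERIV_add) (use L in simp, auto intro!: derivative_eq_intros)
    then show ?thesis by (intro partial_DERIV) simp
  qed
  have cl: "continuous_on {-\<rho><..<\<rho>} (\<lambda>\<tau>. partial u a (\<tau> *\<^sub>R axis ix 1))"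
  proof (rule continuous_on_compose2[OF c1_pcont[OF uc1]])
    show "continuous_on {-\<rho><..<\<rho>} (\<lambda>\<tau>. \<tau> *\<^sub>R axis ix (1::real))" by (intro continuous_intros)
    show "(\<lambda>\<tau>. \<tau> *\<^sub>R axis ix 1) ` {-\<rho><..<\<rho>} \<subseteq> \<Omega>" using inO[of _ 0] rp by auto
  qed
  have D: "((\<lambda>t. oint 0 t (\<lambda>\<tau>. partial u a (\<tau> *\<^sub>R axis ix 1))) has_real_derivative partial u a (0 *\<^sub>R axis ix 1)) (at 0)"
    by (rule oint_DERIV[OF cl]) (use rp in auto)
  have ev: "eventually (\<lambda>t. partial (hhat g ix W h K vpi) a (0 + t *\<^sub>R axis ix 1) = oint 0 t (\<lambda>\<tau>. partial u a (\<tau> *\<^sub>R axis ix 1))) (nhds 0)"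
  proof -
    have "eventually (\<lambda>t::real. t \<in> {-\<rho><..<\<rho>}) (nhds 0)" using rp by (intro eventually_nhds_in_open) auto
    then show ?thesis
    proof (rule eventually_mono)
      fix t :: real assume "t \<in> {-\<rho><..<\<rho>}"
      then have "\<bar>t\<bar> < \<rho>" by auto
      then show "partial (hhat g ix W h K vpi) a (0 + t *\<^sub>R axis ix 1) = oint 0 t (\<lambda>\<tau>. partial u a (\<tau> *\<^sub>R axis ix 1))"
        by (rule pa)
    qed
  qed
  have "((\<lambda>t. partial (hhat g ix W h K vpi) a (0 + t *\<^sub>R axis ix 1)) has_real_derivative partial u a 0) (at 0)"
    using D by (subst DERIV_cong_ev[OF refl ev refl]) simp
  then show ?thesis unfolding u_def by (rule partial_DERIV)
qed

end

lemma quad_pos: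
  fixes ux vpi X :: real and b v :: "'a \<Rightarrow> real"
  assumes I: "finite I" and ux: "ux > 0" and vp: "vpi > (\<Sum>a\<in>I. (b a)^2) / ux"
    and nz: "X \<noteq> 0 \<or> (\<exists>a\<in>I. v a \<noteq> 0)"
  shows "ux * X^2 + 2 * X * (\<Sum>a\<in>I. b a * v a) + vpi * (\<Sum>a\<in>I. (v a)^2) > 0"
proof -
  define S where "S = (\<Sum>a\<in>I. (b a)^2)"
  define B where "B = (\<Sum>a\<in>I. b a * v a)"
  define Y where "Y = (\<Sum>a\<in>I. (v a)^2)"
  have CS: "B^2 \<le> S * Y" unfolding B_def S_def Y_def by (rule Cauchy_Schwarz_ineq_sum)
  have S0: "S \<ge> 0" unfolding S_def by (simp add: sum_nonneg)
  have Y0: "Y \<ge> 0" unfolding Y_def by (simp add: sum_nonneg)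
  have vu: "vpi * ux > S" using vp ux by (simp add: S_def pos_divide_less_eq)
  have id: "ux * (ux * X^2 + 2 * X * B + vpi * Y) = (ux * X + B)^2 + (ux * vpi * Y - B^2)"
    by (simp add: power2_eq_square algebra_simps)
  show ?thesis
  proof (cases "Y = 0")
    case True
    then have "B^2 \<le> 0" using CS by simp
    then have B0: "B = 0" by simp
    have "\<forall>a\<in>I. (v a)^2 = 0" using True I unfolding Y_def by (subst (asm) sum_nonneg_eq_0_iff) auto
    then have "X \<noteq> 0" using nz by auto
    then show ?thesis using ux B0 True by (simp add: B_def[symmetric] Y_def[symmetric])
  next
    case False
    then have Yp: "Y > 0" using Y0 by simp
    have "S * Y < vpi * ux * Y" using vu Yp by simp
    then have "ux * vpi * Y - B^2 > 0" using CS by (simp add: algebra_simps)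
    then have "ux * (ux * X^2 + 2 * X * B + vpi * Y) > 0" unfolding id
      by (smt (verit) zero_le_power2)
    then show ?thesis using ux by (simp add: B_def[symmetric] Y_def[symmetric] zero_less_mult_iff)
  qed
qed

context thm9 begin

lemma hess_form:
  assumes K: "c1 \<Omega> K"
  shows "v \<bullet> (hessian (hhat g ix W h K vpi) 0 *v v)
     = partial (ufun g ix W h K) ix 0 * (v $ ix)^2
       + 2 * v $ ix * (\<Sum>a\<in>UNIV - {ix}. partial (ufun g ix W h K) a 0 * v $ a)
       + vpi * (\<Sum>a\<in>UNIV - {ix}. (v $ a)^2)"
proof -
  define A where "A = hessian (hhat g ix W h K vpi) 0"
  define ux where "ux = partial (ufun g ix W h K) ix 0"
  define b where "b a = partial (ufun g ix W h K) a 0" for a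
  define X where "X = v $ ix"
  have Ae: "A $ i $ j = partial (partial (hhat g ix W h K vpi) j) i 0" for i j by (simp add: A_def hessian_def)
  have Axx: "A $ ix $ ix = ux" using hess_xx_ax[OF K] by (simp add: Ae ux_def)
  have Aax: "A $ a $ ix = b a" for a using hess_xx_ax[OF K] by (simp add: Ae b_def)
  have Axa: "a \<noteq> ix \<Longrightarrow> A $ ix $ a = b a" for a using hess_ix_a[OF K] by (simp add: Ae b_def)
  have Aab: "a \<noteq> ix \<Longrightarrow> c \<noteq> ix \<Longrightarrow> A $ a $ c = (if a = c then vpi else 0)" for a c
    using hess_ab by (simp add: Ae)
  have row: "(A *v v) $ i = A $ i $ ix * X + (\<Sum>j\<in>UNIV - {ix}. A $ i $ j * v $ j)" for i
    unfolding mv_nth X_def by (rule sum.remove) auto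
  have rx: "(A *v v) $ ix = ux * X + (\<Sum>j\<in>UNIV - {ix}. b j * v $ j)"
    unfolding row Axx by (simp add: Axa)
  have ra: "(A *v v) $ a = b a * X + vpi * v $ a" if a: "a \<noteq> ix" for a
  proof -
    have "(\<Sum>j\<in>UNIV - {ix}. A $ a $ j * v $ j) = (\<Sum>j\<in>UNIV - {ix}. if j = a then vpi * v $ a else 0)"
      by (rule sum.cong) (auto simp: Aab a)
    also have "\<dots> = vpi * v $ a" using a by simp
    finally show ?thesis unfolding row Aax by simp
  qed
  have "v \<bullet> (A *v v) = (\<Sum>i\<in>UNIV. v $ i * (A *v v) $ i)" by (simp add: inner_vec_def)
  also have "\<dots> = X * (A *v v) $ ix + (\<Sum>a\<in>UNIV - {ix}. v $ a * (A *v v) $ a)"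
    unfolding X_def by (rule sum.remove) auto
  also have "(\<Sum>a\<in>UNIV - {ix}. v $ a * (A *v v) $ a) = (\<Sum>a\<in>UNIV - {ix}. X * (b a * v $ a) + vpi * (v $ a)^2)"
    by (rule sum.cong) (auto simp: ra power2_eq_square algebra_simps)
  also have "\<dots> = X * (\<Sum>a\<in>UNIV - {ix}. b a * v $ a) + vpi * (\<Sum>a\<in>UNIV - {ix}. (v $ a)^2)"
    by (simp add: sum.distrib sum_distrib_left)
  finally have "v \<bullet> (A *v v) = X * (ux * X + (\<Sum>j\<in>UNIV - {ix}. b j * v $ j)) + (X * (\<Sum>a\<in>UNIV - {ix}. b a * v $ a) + vpi * (\<Sum>a\<in>UNIV - {ix}. (v $ a)^2))"
    by (simp add: rx)
  moreover have "b ix = ux" by (simp add: b_def ux_def)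
  ultimately show ?thesis unfolding A_def[symmetric] ux_def[symmetric] b_def[symmetric] X_def[symmetric]
    by (simp add: power2_eq_square algebra_simps)
qed

lemma part3_pos:
  assumes K: "c1 \<Omega> K" and hd: "(h has_derivative (\<lambda>v. 0)) (at 0)"
    and ux: "partial (ufun g ix W h K) ix 0 > 0"
    and vp: "vpi > (\<Sum>a\<in>UNIV - {ix}. (partial (ufun g ix W h K) a 0)^2) / partial (ufun g ix W h K) ix 0"
  shows "(hhat g ix W h K vpi has_derivative (\<lambda>v. 0)) (at 0) \<and> pos_def (hessian (hhat g ix W h K vpi) 0)"
proof
  show "(hhat g ix W h K vpi has_derivative (\<lambda>v. 0)) (at 0)" by (rule hhat_deriv0[OF K hd])
  show "pos_def (hessian (hhat g ix W h K vpi) 0)" unfolding pos_def_def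
  proof (intro allI impI)
    fix v :: "real^'n" assume v: "v \<noteq> 0"
    have nz: "v $ ix \<noteq> 0 \<or> (\<exists>a\<in>UNIV - {ix}. v $ a \<noteq> 0)"
    proof (rule ccontr)
      assume "\<not> (v $ ix \<noteq> 0 \<or> (\<exists>a\<in>UNIV - {ix}. v $ a \<noteq> 0))"
      then have "\<forall>k. v $ k = 0" by auto
      then have "v = 0" by (simp add: vec_eq_iff)
      then show False using v by simp
    qed
    show "0 < v \<bullet> (hessian (hhat g ix W h K vpi) 0 *v v)"
      unfolding hess_form[OF K] by (rule quad_pos[OF _ ux vp nz]) simp
  qed
qed

lemma part3_neg:
  assumes ux: "partial (ufun g ix W h K) ix 0 \<le> 0" and pe: "potential_eq \<Omega> g ix W h K f"
  shows "\<not> pos_def (hessian f 0)"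
proof
  assume pd: "pos_def (hessian f 0)"
  have "partial (partial f ix) ix 0 = partial (ufun g ix W h K) ix 0"
    by (rule partial_cong_open[OF open_\<Omega> zero_\<Omega>]) (use pe pot_iff in blast)
  moreover have "axis ix 1 \<bullet> (hessian f 0 *v axis ix 1) = partial (partial f ix) ix 0"
    by (simp add: inner_axis' mv_axis hessian_def)
  moreover have "axis ix (1::real) \<noteq> 0" by (simp add: axis_eq_0_iff)
  ultimately show False using pd ux unfolding pos_def_def by (metis not_le)
qed

end

context thm9 begin

lemma main_loc:
  shows
   "(\<forall>K. smooth_on \<Omega> K \<and> (\<forall>q\<in>\<Omega>. K q > 0) \<longrightarrow>
        (kinetic_eq \<Omega> g ix W K \<longleftrightarrow>
          (\<exists>\<xi>. smooth_on \<Omega> \<xi> \<and> (\<forall>q\<in>\<Omega>. \<xi> q > 0 \<and> \<xi> q = \<xi> (upd ix q 0)) \<and>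
               (\<forall>q\<in>\<Omega>. K q = \<xi> q * exp (- oint 0 (q $ ix) (\<lambda>t. Gfun g ix W (upd ix q t)))))))
    \<and> (\<forall>K vpi. smooth_on \<Omega> K \<and> (\<forall>q\<in>\<Omega>. K q > 0) \<and> kinetic_eq \<Omega> g ix W K \<longrightarrow>
        potential_eq \<Omega> g ix W h K (hhat g ix W h K vpi))
    \<and> ((h has_derivative (\<lambda>v. 0)) (at 0) \<longrightarrow>
        (\<forall>K. smooth_on \<Omega> K \<and> (\<forall>q\<in>\<Omega>. K q > 0) \<and> kinetic_eq \<Omega> g ix W K \<longrightarrow>
          (\<forall>vpi. partial (ufun g ix W h K) ix 0 > 0 \<and>
                vpi > (\<Sum>a\<in>UNIV - {ix}. (partial (ufun g ix W h K) a 0)^2)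
                      / partial (ufun g ix W h K) ix 0 \<longrightarrow>
                (hhat g ix W h K vpi has_derivative (\<lambda>v. 0)) (at 0)
                \<and> pos_def (hessian (hhat g ix W h K vpi) 0))
          \<and> (partial (ufun g ix W h K) ix 0 \<le> 0 \<longrightarrow>
               (\<forall>f. smooth_on \<Omega> f \<and> potential_eq \<Omega> g ix W h K f \<longrightarrow>
                    \<not> pos_def (hessian f 0)))))"
proof (intro conjI allI impI)
  fix K assume "smooth_on \<Omega> K \<and> (\<forall>q\<in>\<Omega>. K q > 0)"
  then show "kinetic_eq \<Omega> g ix W K \<longleftrightarrow>
          (\<exists>\<xi>. smooth_on \<Omega> \<xi> \<and> (\<forall>q\<in>\<Omega>. \<xi> q > 0 \<and> \<xi> q = \<xi> (upd ix q 0)) \<and>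
               (\<forall>q\<in>\<Omega>. K q = \<xi> q * exp (- oint 0 (q $ ix) (\<lambda>t. Gfun g ix W (upd ix q t)))))"
    using part1 by blast
next
  fix K vpi assume "smooth_on \<Omega> K \<and> (\<forall>q\<in>\<Omega>. K q > 0) \<and> kinetic_eq \<Omega> g ix W K"
  then show "potential_eq \<Omega> g ix W h K (hhat g ix W h K vpi)"
    using part2 smooth_c1 by blast
next
  fix K vpi
  assume hd: "(h has_derivative (\<lambda>v. 0)) (at 0)"
    and K: "smooth_on \<Omega> K \<and> (\<forall>q\<in>\<Omega>. K q > 0) \<and> kinetic_eq \<Omega> g ix W K"
    and c: "partial (ufun g ix W h K) ix 0 > 0 \<and>
                vpi > (\<Sum>a\<in>UNIV - {ix}. (partial (ufun g ix W h K) a 0)^2)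
                      / partial (ufun g ix W h K) ix 0"
  have Kc: "c1 \<Omega> K" using K smooth_c1 by blast
  show "(hhat g ix W h K vpi has_derivative (\<lambda>v. 0)) (at 0)"
    using part3_pos[OF Kc hd] c by blast
  show "pos_def (hessian (hhat g ix W h K vpi) 0)"
    using part3_pos[OF Kc hd] c by blast
next
  fix K f
  assume "partial (ufun g ix W h K) ix 0 \<le> 0"
    and "smooth_on \<Omega> f \<and> potential_eq \<Omega> g ix W h K f"
  then show "\<not> pos_def (hessian f 0)" using part3_neg by blast
qed

end

theorem mainTheorem9:
  fixes ix :: "'n::finite" and r :: real and lo hi :: "real^'n"
    and g :: "real^'n \<Rightarrow> real^'n^'n" and W :: "real^'n \<Rightarrow> (real^'n) set"
    and h :: "real^'n \<Rightarrow> real"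
  defines "\<Omega> \<equiv> box lo hi"
  assumes r: "r > 0" "lo $ ix = - r" "hi $ ix = r"
    and box0: "\<forall>k. lo $ k < 0 \<and> 0 < hi $ k"
    and g_smooth: "\<forall>i j. smooth_on \<Omega> (\<lambda>q. g q $ i $ j)"
    and g_sym: "\<forall>q\<in>\<Omega>. transpose (g q) = g q"
    and g_pos: "\<forall>q\<in>\<Omega>. pos_def (g q)"
    and W_sub: "\<forall>q\<in>\<Omega>. subspace (W q) \<and> dim (W q) = CARD('n) - 1"
    and W_compl: "\<forall>q\<in>\<Omega>. W q \<inter> What g ix q = {0}
                      \<and> {a + b | a b. a \<in> W q \<and> b \<in> What g ix q} = UNIV"
    and W_smooth: "\<forall>q\<in>\<Omega>. \<exists>V F. open V \<and> q \<in> V \<and>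
                     (\<forall>p\<in>V \<inter> \<Omega>. W p = span ((\<lambda>a. F a p) ` (UNIV - {ix}))) \<and>
                     (\<forall>a k. smooth_on V (\<lambda>p. (F a p :: real^'n) $ k))"
    and h_smooth: "smooth_on \<Omega> h"
  shows
   "(\<forall>K. smooth_on \<Omega> K \<and> (\<forall>q\<in>\<Omega>. K q > 0) \<longrightarrow>
        (kinetic_eq \<Omega> g ix W K \<longleftrightarrow>
          (\<exists>\<xi>. smooth_on \<Omega> \<xi> \<and> (\<forall>q\<in>\<Omega>. \<xi> q > 0 \<and> \<xi> q = \<xi> (upd ix q 0)) \<and>
               (\<forall>q\<in>\<Omega>. K q = \<xi> q * exp (- oint 0 (q $ ix) (\<lambda>t. Gfun g ix W (upd ix q t)))))))
    \<and> (\<forall>K vpi. smooth_on \<Omega> K \<and> (\<forall>q\<in>\<Omega>. K q > 0) \<and> kinetic_eq \<Omega> g ix W K \<longrightarrow>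
        potential_eq \<Omega> g ix W h K (hhat g ix W h K vpi))
    \<and> ((h has_derivative (\<lambda>v. 0)) (at 0) \<longrightarrow>
        (\<forall>K. smooth_on \<Omega> K \<and> (\<forall>q\<in>\<Omega>. K q > 0) \<and> kinetic_eq \<Omega> g ix W K \<longrightarrow>
          (\<forall>vpi. partial (ufun g ix W h K) ix 0 > 0 \<and>
                vpi > (\<Sum>a\<in>UNIV - {ix}. (partial (ufun g ix W h K) a 0)^2)
                      / partial (ufun g ix W h K) ix 0 \<longrightarrow>
                (hhat g ix W h K vpi has_derivative (\<lambda>v. 0)) (at 0)
                \<and> pos_def (hessian (hhat g ix W h K vpi) 0))
          \<and> (partial (ufun g ix W h K) ix 0 \<le> 0 \<longrightarrow>
               (\<forall>f. smooth_on \<Omega> f \<and> potential_eq \<Omega> g ix W h K f \<longrightarrow>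
                    \<not> pos_def (hessian f 0)))))"
proof -
  interpret thm9 ix r lo hi g W h \<Omega>
    by (unfold_locales) (use assms in \<open>simp_all add: \<Omega>_def\<close>)
  show ?thesis by (rule main_loc)
qed

end
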